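(* Let $X$ be any simplicial set and let $\widetilde X$ be defined by the pushout square \[ \begin{array}{ccc}(\Delta^1)^{\sqcup X_1}&\to&J^{\sqcup X_1}\\ \downarrow&&\downarrow\\ X&\xrightarrow{i}&\widetilde X.\end{array} \] Then the homotopy category of $\widetilde X$ is a groupoid and the natural inclusion $i\colon X\hookrightarrow\widetilde X$ is an acyclic cofibration. In particular, the induced map $|i|\colon|X|\to|\widetilde X|$ on geometric realizations is a homotopy equivalence.
   Context: $J$ is the nerve of the groupoid $\mathcal J$ with two objects $j_0,j_1$ and exactly two non-identity morphisms $e\colon j_0\to j_1$ and $e^{-1}\colon j_1\to j_0$; $\Delta^1\hookrightarrow J$ is the inclusion of the $1$-simplex $e$. In the pushout, $(\Delta^1)^{\sqcup X_1}$ and $J^{\sqcup X_1}$ denote disjoint unions of copies indexed by the set $X_1$ of $1$-simplices of $X$, the left vertical map sends the copy of $\Delta^1$ indexed by $\sigma$ to $\sigma$, and the top map is the disjoint union of the inclusions $\Delta^1\hookrightarrow J$. Acyclic cofibrations refer to the Kan–Quillen model structure on simplicial sets (monomorphisms that are weak homotopy equivalences). The homotopy category of a simplicial set is the category freely generated by its $1$-simplices modulo relations from $2$-simplices. *)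

theory Defs
  imports "HOL-Analysis.Analysis"
begin

text \<open>A morphism [m] -> [n] of the simplex category is a monotone map
  {0..m} -> {0..n}, represented by a function nat => nat (only its values on
  {0..m} matter).\<close>

definition dmor :: "nat \<Rightarrow> nat \<Rightarrow> (nat \<Rightarrow> nat) \<Rightarrow> bool" where
  "dmor m n \<theta> \<longleftrightarrow> (\<forall>i\<le>m. \<theta> i \<le> n) \<and> (\<forall>i j. i \<le> j \<longrightarrow> j \<le> m \<longrightarrow> \<theta> i \<le> \<theta> j)"

text \<open>simp X n is the set of n-simplices; act X m n \<theta> x is \<theta>^* x for
  \<theta> : [m] -> [n] and x an n-simplex.\<close>

record 'a sset =
  simp :: "nat \<Rightarrow> 'a set"
  act  :: "nat \<Rightarrow> nat \<Rightarrow> (nat \<Rightarrow> nat) \<Rightarrow> 'a \<Rightarrow> 'a"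

definition is_sset :: "'a sset \<Rightarrow> bool" where
  "is_sset X \<longleftrightarrow>
     (\<forall>m n \<theta> x. dmor m n \<theta> \<longrightarrow> x \<in> simp X n \<longrightarrow> act X m n \<theta> x \<in> simp X m) \<and>
     (\<forall>n x. x \<in> simp X n \<longrightarrow> act X n n id x = x) \<and>
     (\<forall>m n p \<theta> \<phi> x. dmor m n \<theta> \<longrightarrow> dmor n p \<phi> \<longrightarrow> x \<in> simp X p \<longrightarrow>
        act X m n \<theta> (act X n p \<phi> x) = act X m p (\<phi> \<circ> \<theta>) x) \<and>
     (\<forall>m n \<theta> \<theta>' x. (\<forall>i\<le>m. \<theta> i = \<theta>' i) \<longrightarrow> act X m n \<theta> x = act X m n \<theta>' x)"

definition sset_map :: "'a sset \<Rightarrow> 'b sset \<Rightarrow> (nat \<Rightarrow> 'a \<Rightarrow> 'b) \<Rightarrow> bool" where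
  "sset_map X Y f \<longleftrightarrow>
     (\<forall>n x. x \<in> simp X n \<longrightarrow> f n x \<in> simp Y n) \<and>
     (\<forall>m n \<theta> x. dmor m n \<theta> \<longrightarrow> x \<in> simp X n \<longrightarrow> f m (act X m n \<theta> x) = act Y m n \<theta> (f n x))"

definition sset_mono :: "'a sset \<Rightarrow> 'b sset \<Rightarrow> (nat \<Rightarrow> 'a \<Rightarrow> 'b) \<Rightarrow> bool" where
  "sset_mono X Y f \<longleftrightarrow> sset_map X Y f \<and> (\<forall>n. inj_on (f n) (simp X n))"

definition equiv_closure_on :: "'a set \<Rightarrow> ('a \<times> 'a) set \<Rightarrow> ('a \<times> 'a) set" where
  "equiv_closure_on S R = (R \<union> R\<inverse>)\<^sup>* \<inter> (S \<times> S)"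

definition po_rel :: "'c sset \<Rightarrow> 'a sset \<Rightarrow> 'b sset \<Rightarrow> (nat \<Rightarrow> 'c \<Rightarrow> 'a) \<Rightarrow> (nat \<Rightarrow> 'c \<Rightarrow> 'b)
    \<Rightarrow> nat \<Rightarrow> (('a + 'b) \<times> ('a + 'b)) set" where
  "po_rel C A B f g n = equiv_closure_on (simp A n <+> simp B n)
      {(Inl (f n c), Inr (g n c)) | c. c \<in> simp C n}"

definition sum_act :: "'a sset \<Rightarrow> 'b sset \<Rightarrow> nat \<Rightarrow> nat \<Rightarrow> (nat \<Rightarrow> nat) \<Rightarrow> 'a + 'b \<Rightarrow> 'a + 'b" where
  "sum_act A B m n \<theta> z = (case z of Inl a \<Rightarrow> Inl (act A m n \<theta> a) | Inr b \<Rightarrow> Inr (act B m n \<theta> b))"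

definition sset_pushout :: "'c sset \<Rightarrow> 'a sset \<Rightarrow> 'b sset \<Rightarrow> (nat \<Rightarrow> 'c \<Rightarrow> 'a) \<Rightarrow> (nat \<Rightarrow> 'c \<Rightarrow> 'b)
    \<Rightarrow> ('a + 'b) set sset" where
  "sset_pushout C A B f g =
     \<lparr> simp = (\<lambda>n. (simp A n <+> simp B n) // po_rel C A B f g n),
       act = (\<lambda>m n \<theta> c. po_rel C A B f g m `` {sum_act A B m n \<theta> (SOME z. z \<in> c)}) \<rparr>"

definition po_inl :: "'c sset \<Rightarrow> 'a sset \<Rightarrow> 'b sset \<Rightarrow> (nat \<Rightarrow> 'c \<Rightarrow> 'a) \<Rightarrow> (nat \<Rightarrow> 'c \<Rightarrow> 'b)
    \<Rightarrow> nat \<Rightarrow> 'a \<Rightarrow> ('a + 'b) set" where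
  "po_inl C A B f g n a = po_rel C A B f g n `` {Inl a}"

text \<open>J = nerve of the groupoid with two objects j0 = 0, j1 = 1 and exactly one
  morphism between any two objects: an n-simplex is a sequence of objects
  (s 0, ..., s n) (normalised by s i = 0 for i > n).\<close>

definition J_sset :: "(nat \<Rightarrow> nat) sset" where
  "J_sset = \<lparr> simp = (\<lambda>n. {s. (\<forall>i\<le>n. s i \<le> 1) \<and> (\<forall>i>n. s i = 0)}),
              act = (\<lambda>m n \<theta> s. (\<lambda>i. if i \<le> m then s (\<theta> i) else 0)) \<rparr>"

text \<open>Delta^1: n-simplices are monotone maps [n] -> [1]; it sits inside J as the
  1-simplex e : j0 -> j1.\<close>

definition Delta1_sset :: "(nat \<Rightarrow> nat) sset" where
  "Delta1_sset = \<lparr> simp = (\<lambda>n. {s. dmor n 1 s \<and> (\<forall>i>n. s i = 0)}),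
                   act = (\<lambda>m n \<theta> s. (\<lambda>i. if i \<le> m then s (\<theta> i) else 0)) \<rparr>"

definition copr_sset :: "'i set \<Rightarrow> 'b sset \<Rightarrow> ('i \<times> 'b) sset" where
  "copr_sset I Y = \<lparr> simp = (\<lambda>n. I \<times> simp Y n),
                     act = (\<lambda>m n \<theta> p. (fst p, act Y m n \<theta> (snd p))) \<rparr>"

text \<open>The left vertical map: the copy of Delta^1 indexed by sigma goes to sigma
  (the Yoneda map: s : [n] -> [1] is sent to s^* sigma).\<close>

definition classify_map :: "'a sset \<Rightarrow> nat \<Rightarrow> 'a \<times> (nat \<Rightarrow> nat) \<Rightarrow> 'a" where
  "classify_map X n p = act X n 1 (snd p) (fst p)"

definition tildeX :: "'a sset \<Rightarrow> ('a + 'a \<times> (nat \<Rightarrow> nat)) set sset" where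
  "tildeX X = sset_pushout (copr_sset (simp X 1) Delta1_sset) X (copr_sset (simp X 1) J_sset)
                 (classify_map X) (\<lambda>n p. p)"

definition tilde_incl :: "'a sset \<Rightarrow> nat \<Rightarrow> 'a \<Rightarrow> ('a + 'a \<times> (nat \<Rightarrow> nat)) set" where
  "tilde_incl X = po_inl (copr_sset (simp X 1) Delta1_sset) X (copr_sset (simp X 1) J_sset)
                 (classify_map X) (\<lambda>n p. p)"

definition src1 :: "'a sset \<Rightarrow> 'a \<Rightarrow> 'a" where "src1 X e = act X 0 1 (\<lambda>_. 0) e"
definition tgt1 :: "'a sset \<Rightarrow> 'a \<Rightarrow> 'a" where "tgt1 X e = act X 0 1 (\<lambda>_. 1) e"
definition degen0 :: "'a sset \<Rightarrow> 'a \<Rightarrow> 'a" where "degen0 X x = act X 1 0 (\<lambda>_. 0) x"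

definition face2 :: "'a sset \<Rightarrow> nat \<Rightarrow> 'a \<Rightarrow> 'a" where
  "face2 X k t = act X 1 2 (\<lambda>j. if j < k then j else j + 1) t"
definition vert2 :: "'a sset \<Rightarrow> nat \<Rightarrow> 'a \<Rightarrow> 'a" where
  "vert2 X k t = act X 0 2 (\<lambda>_. k) t"

text \<open>Paths of composable 1-simplices (morphisms of the free category).\<close>

fun is_path :: "'a sset \<Rightarrow> 'a \<Rightarrow> 'a list \<Rightarrow> 'a \<Rightarrow> bool" where
  "is_path X x [] y \<longleftrightarrow> x = y \<and> x \<in> simp X 0"
| "is_path X x (e # p) y \<longleftrightarrow> e \<in> simp X 1 \<and> src1 X e = x \<and> x \<in> simp X 0 \<and> is_path X (tgt1 X e) p y"

text \<open>The congruence generated by the 2-simplex relations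
  d1 t = d0 t o d2 t and by degenerate 1-simplices being identities.\<close>

inductive hrel :: "'a sset \<Rightarrow> 'a \<Rightarrow> 'a \<Rightarrow> 'a list \<Rightarrow> 'a list \<Rightarrow> bool" for X where
  hrefl: "is_path X x p y \<Longrightarrow> hrel X x y p p"
| hsym: "hrel X x y p q \<Longrightarrow> hrel X x y q p"
| htrans: "hrel X x y p q \<Longrightarrow> hrel X x y q r \<Longrightarrow> hrel X x y p r"
| hcong: "hrel X x y p q \<Longrightarrow> is_path X w a x \<Longrightarrow> is_path X y b z \<Longrightarrow> hrel X w z (a @ p @ b) (a @ q @ b)"
| htri: "t \<in> simp X 2 \<Longrightarrow> hrel X (vert2 X 0 t) (vert2 X 2 t) [face2 X 1 t] [face2 X 2 t, face2 X 0 t]"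
| hdeg: "x \<in> simp X 0 \<Longrightarrow> hrel X x x [degen0 X x] []"

definition hocat_is_groupoid :: "'a sset \<Rightarrow> bool" where
  "hocat_is_groupoid X \<longleftrightarrow>
     (\<forall>x p y. is_path X x p y \<longrightarrow>
        (\<exists>q. is_path X y q x \<and> hrel X x x (p @ q) [] \<and> hrel X y y (q @ p) []))"

definition std_simplex :: "nat \<Rightarrow> (nat \<Rightarrow> real) set" where
  "std_simplex n = {t. (\<forall>i. 0 \<le> t i) \<and> (\<forall>i>n. t i = 0) \<and> sum t {..n} = 1}"

definition pre_points :: "'a sset \<Rightarrow> (nat \<times> 'a \<times> (nat \<Rightarrow> real)) set" where
  "pre_points X = {(n, x, t). x \<in> simp X n \<and> t \<in> std_simplex n}"

text \<open>Topology of the disjoint union of the X_n x Delta^n (X_n discrete).\<close>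

definition pre_top :: "'a sset \<Rightarrow> (nat \<times> 'a \<times> (nat \<Rightarrow> real)) topology" where
  "pre_top X = topology (\<lambda>U. U \<subseteq> pre_points X \<and>
      (\<forall>n x. x \<in> simp X n \<longrightarrow>
         openin (subtopology (powertop_real UNIV) (std_simplex n)) {t. (n, x, t) \<in> U}))"

definition simplex_push :: "nat \<Rightarrow> (nat \<Rightarrow> nat) \<Rightarrow> (nat \<Rightarrow> real) \<Rightarrow> (nat \<Rightarrow> real)" where
  "simplex_push m \<theta> t = (\<lambda>j. \<Sum>i\<in>{i. i \<le> m \<and> \<theta> i = j}. t i)"

definition real_rel :: "'a sset \<Rightarrow> ((nat \<times> 'a \<times> (nat \<Rightarrow> real)) \<times> (nat \<times> 'a \<times> (nat \<Rightarrow> real))) set" where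
  "real_rel X = equiv_closure_on (pre_points X)
     {((m, act X m n \<theta> x, t), (n, x, simplex_push m \<theta> t)) | m n \<theta> x t.
        dmor m n \<theta> \<and> x \<in> simp X n \<and> t \<in> std_simplex m}"

definition realization :: "'a sset \<Rightarrow> (nat \<times> 'a \<times> (nat \<Rightarrow> real)) set topology" where
  "realization X = topology (\<lambda>U. U \<subseteq> pre_points X // real_rel X \<and> openin (pre_top X) (\<Union>U))"

definition real_map :: "'a sset \<Rightarrow> 'b sset \<Rightarrow> (nat \<Rightarrow> 'a \<Rightarrow> 'b)
    \<Rightarrow> (nat \<times> 'a \<times> (nat \<Rightarrow> real)) set \<Rightarrow> (nat \<times> 'b \<times> (nat \<Rightarrow> real)) set" where
  "real_map X Y f c = (case (SOME p. p \<in> c) of (n, x, t) \<Rightarrow> real_rel Y `` {(n, f n x, t)})"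

definition sphere_base :: "nat \<Rightarrow> real" where "sphere_base = (\<lambda>i. if i = 0 then 1 else 0)"

text \<open>Weak homotopy equivalence: bijection on path components and on all
  homotopy groups pi_n(X,x) (as based homotopy classes of maps S^n -> X), n \<ge> 0,
  for every base point x.\<close>

definition weak_homotopy_equivalence :: "'a topology \<Rightarrow> 'b topology \<Rightarrow> ('a \<Rightarrow> 'b) \<Rightarrow> bool" where
  "weak_homotopy_equivalence S T f \<longleftrightarrow>
     continuous_map S T f \<and>
     (\<forall>y\<in>topspace T. \<exists>x\<in>topspace S. path_component_of T (f x) y) \<and>
     (\<forall>n. \<forall>x\<in>topspace S.
        (\<forall>g1 g2. continuous_map (nsphere n) S g1 \<and> g1 sphere_base = x \<and>
                 continuous_map (nsphere n) S g2 \<and> g2 sphere_base = x \<and>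
                 homotopic_with (\<lambda>h. h sphere_base = f x) (nsphere n) T (f \<circ> g1) (f \<circ> g2)
                 \<longrightarrow> homotopic_with (\<lambda>h. h sphere_base = x) (nsphere n) S g1 g2) \<and>
        (\<forall>h. continuous_map (nsphere n) T h \<and> h sphere_base = f x \<longrightarrow>
           (\<exists>g. continuous_map (nsphere n) S g \<and> g sphere_base = x \<and>
                homotopic_with (\<lambda>k. k sphere_base = f x) (nsphere n) T (f \<circ> g) h)))"

definition homotopy_equivalence_map :: "'a topology \<Rightarrow> 'b topology \<Rightarrow> ('a \<Rightarrow> 'b) \<Rightarrow> bool" where
  "homotopy_equivalence_map S T f \<longleftrightarrow>
     continuous_map S T f \<and>
     (\<exists>g. continuous_map T S g \<and>
          homotopic_with (\<lambda>_. True) S S (g \<circ> f) id \<and>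
          homotopic_with (\<lambda>_. True) T T (f \<circ> g) id)"

definition weak_equivalence :: "'a sset \<Rightarrow> 'b sset \<Rightarrow> (nat \<Rightarrow> 'a \<Rightarrow> 'b) \<Rightarrow> bool" where
  "weak_equivalence X Y f \<longleftrightarrow> sset_map X Y f \<and>
     weak_homotopy_equivalence (realization X) (realization Y) (real_map X Y f)"

definition acyclic_cofibration :: "'a sset \<Rightarrow> 'b sset \<Rightarrow> (nat \<Rightarrow> 'a \<Rightarrow> 'b) \<Rightarrow> bool" where
  "acyclic_cofibration X Y f \<longleftrightarrow> sset_mono X Y f \<and> weak_equivalence X Y f"

end

theory Submission
  imports Defs
begin

abbreviation "Ist \<equiv> top_of_set {0..(1::real)}"
abbreviation "SX n \<equiv> subtopology (powertop_real UNIV) (std_simplex n)"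

lemma sym_star_sym: "(x, y) \<in> (R \<union> R\<inverse>)\<^sup>* \<Longrightarrow> (y, x) \<in> (R \<union> R\<inverse>)\<^sup>*"
proof -
  assume "(x, y) \<in> (R \<union> R\<inverse>)\<^sup>*"
  then have "(y, x) \<in> ((R \<union> R\<inverse>)\<inverse>)\<^sup>*" by (rule rtrancl_converseI)
  moreover have "(R \<union> R\<inverse>)\<inverse> = R \<union> R\<inverse>" by auto
  ultimately show ?thesis by simp
qed

lemma equiv_closure_on_equiv: "equiv S (equiv_closure_on S R)"
proof (rule equivI)
  show "equiv_closure_on S R \<subseteq> S \<times> S" unfolding equiv_closure_on_def by (rule Int_lower2)
  show "refl_on S (equiv_closure_on S R)" unfolding equiv_closure_on_def refl_on_def by simp
  show "sym (equiv_closure_on S R)" unfolding equiv_closure_on_def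
    by (rule symI) (simp add: sym_star_sym)
  show "trans (equiv_closure_on S R)" unfolding equiv_closure_on_def
    by (rule transI) (blast intro: rtrancl_trans)
qed

lemma equiv_real: "equiv (pre_points X) (real_rel X)"
  unfolding real_rel_def by (rule equiv_closure_on_equiv)

lemma istop_pre: "istopology (\<lambda>U. U \<subseteq> pre_points X \<and>
      (\<forall>n x. x \<in> simp X n \<longrightarrow>
         openin (SX n) {t. (n, x, t) \<in> U}))"
  unfolding istopology_def
proof (rule conjI; intro allI impI)
  fix S T :: "(nat \<times> 'a \<times> (nat \<Rightarrow> real)) set"
  assume a: "S \<subseteq> pre_points X \<and> (\<forall>n x. x \<in> simp X n \<longrightarrow> openin (SX n) {t. (n, x, t) \<in> S})"
     "T \<subseteq> pre_points X \<and> (\<forall>n x. x \<in> simp X n \<longrightarrow> openin (SX n) {t. (n, x, t) \<in> T})"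
  have "{t. (n, x, t) \<in> S \<inter> T} = {t. (n, x, t) \<in> S} \<inter> {t. (n, x, t) \<in> T}" for n x by auto
  then show "S \<inter> T \<subseteq> pre_points X \<and> (\<forall>n x. x \<in> simp X n \<longrightarrow> openin (SX n) {t. (n, x, t) \<in> S \<inter> T})"
    using a by auto
next
  fix K :: "(nat \<times> 'a \<times> (nat \<Rightarrow> real)) set set"
  assume a: "\<forall>S\<in>K. S \<subseteq> pre_points X \<and> (\<forall>n x. x \<in> simp X n \<longrightarrow> openin (SX n) {t. (n, x, t) \<in> S})"
  have "{t. (n, x, t) \<in> \<Union>K} = \<Union>((\<lambda>S. {t. (n, x, t) \<in> S}) ` K)" for n x by auto
  then show "\<Union>K \<subseteq> pre_points X \<and> (\<forall>n x. x \<in> simp X n \<longrightarrow> openin (SX n) {t. (n, x, t) \<in> \<Union>K})"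
    using a by (auto intro!: openin_Union)
qed

lemma openin_pre: "openin (pre_top X) U \<longleftrightarrow> U \<subseteq> pre_points X \<and>
      (\<forall>n x. x \<in> simp X n \<longrightarrow> openin (SX n) {t. (n, x, t) \<in> U})"
  unfolding pre_top_def topology_inverse'[OF istop_pre] by (rule refl)

lemma topspace_SX: "topspace (SX n) = std_simplex n" by simp

lemma topspace_pre: "topspace (pre_top X) = pre_points X"
proof -
  have "openin (pre_top X) (pre_points X)"
    unfolding openin_pre
  proof (intro conjI allI impI)
    fix n x assume x: "x \<in> simp X n"
    have eq: "{t. (n, x, t) \<in> pre_points X} = std_simplex n"
      using x by (simp add: pre_points_def)
    have "openin (SX n) (topspace (SX n))" by (rule openin_topspace)
    then show "openin (SX n) {t. (n, x, t) \<in> pre_points X}" unfolding eq by simp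
  qed simp
  then have 1: "pre_points X \<subseteq> topspace (pre_top X)" by (rule openin_subset)
  have "topspace (pre_top X) \<subseteq> pre_points X"
    using openin_topspace[of "pre_top X"] unfolding openin_pre by (rule conjunct1)
  with 1 show ?thesis by (rule subset_antisym[rotated])
qed

lemma istop_real: "istopology (\<lambda>U. U \<subseteq> pre_points X // real_rel X \<and> openin (pre_top X) (\<Union>U))"
  unfolding istopology_def
proof (rule conjI; intro allI impI)
  fix S T :: "(nat \<times> 'a \<times> (nat \<Rightarrow> real)) set set"
  assume a: "S \<subseteq> pre_points X // real_rel X \<and> openin (pre_top X) (\<Union>S)"
            "T \<subseteq> pre_points X // real_rel X \<and> openin (pre_top X) (\<Union>T)"
  have "\<Union>(S \<inter> T) = \<Union>S \<inter> \<Union>T"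
  proof
    show "\<Union>S \<inter> \<Union>T \<subseteq> \<Union>(S \<inter> T)"
    proof
      fix p assume "p \<in> \<Union>S \<inter> \<Union>T"
      then obtain u v where uv: "u \<in> S" "v \<in> T" "p \<in> u" "p \<in> v" by auto
      then have "u = v" using a quotient_disj[OF equiv_real[of X]] by blast
      then show "p \<in> \<Union>(S \<inter> T)" using uv by auto
    qed
  qed auto
  then show "S \<inter> T \<subseteq> pre_points X // real_rel X \<and> openin (pre_top X) (\<Union>(S \<inter> T))"
    using a by auto
next
  fix K :: "(nat \<times> 'a \<times> (nat \<Rightarrow> real)) set set set"
  assume a: "\<forall>S\<in>K. S \<subseteq> pre_points X // real_rel X \<and> openin (pre_top X) (\<Union>S)"
  have eq: "\<Union>(\<Union>K) = \<Union>(Union ` K)" by auto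
  have "\<forall>S\<in>K. openin (pre_top X) (\<Union>S)" using a by blast
  then have "openin (pre_top X) (\<Union>(Union ` K))" by (intro openin_Union) blast
  moreover have "\<Union>K \<subseteq> pre_points X // real_rel X" using a by blast
  ultimately show "\<Union>K \<subseteq> pre_points X // real_rel X \<and> openin (pre_top X) (\<Union>(\<Union>K))"
    unfolding eq by blast
qed

lemma openin_realization: "openin (realization X) U \<longleftrightarrow> U \<subseteq> pre_points X // real_rel X \<and> openin (pre_top X) (\<Union>U)"
  unfolding realization_def topology_inverse'[OF istop_real] by (rule refl)

lemma topspace_realization: "topspace (realization X) = pre_points X // real_rel X"
proof -
  have "openin (realization X) (pre_points X // real_rel X)"
    unfolding openin_realization
    using Union_quotient[OF equiv_real[of X]] topspace_pre[of X] openin_topspace[of "pre_top X"] by simp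
  then have 1: "pre_points X // real_rel X \<subseteq> topspace (realization X)" by (rule openin_subset)
  have "topspace (realization X) \<subseteq> pre_points X // real_rel X"
    using openin_topspace[of "realization X"] unfolding openin_realization by (rule conjunct1)
  with 1 show ?thesis by (rule subset_antisym[rotated])
qed

definition rq :: "'a sset \<Rightarrow> nat \<times> 'a \<times> (nat \<Rightarrow> real) \<Rightarrow> (nat \<times> 'a \<times> (nat \<Rightarrow> real)) set" where
  "rq X p = real_rel X `` {p}"

lemma quotient_rq: "quotient_map (pre_top X) (realization X) (rq X)"
  unfolding quotient_map_def
proof (intro conjI allI impI)
  show "rq X ` topspace (pre_top X) = topspace (realization X)"
    unfolding topspace_pre topspace_realization rq_def quotient_def by blast
next
  fix U assume U: "U \<subseteq> topspace (realization X)"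
  have "{x \<in> topspace (pre_top X). rq X x \<in> U} = \<Union>U"
  proof
    show "{x \<in> topspace (pre_top X). rq X x \<in> U} \<subseteq> \<Union> U"
    proof
      fix x assume x: "x \<in> {x \<in> topspace (pre_top X). rq X x \<in> U}"
      then have "x \<in> rq X x" unfolding rq_def topspace_pre using equiv_class_self[OF equiv_real] by blast
      then show "x \<in> \<Union>U" using x by blast
    qed
    show "\<Union> U \<subseteq> {x \<in> topspace (pre_top X). rq X x \<in> U}"
    proof
      fix p assume "p \<in> \<Union>U"
      then obtain u where u: "u \<in> U" "p \<in> u" by auto
      then have uq: "u \<in> pre_points X // real_rel X" using U by (auto simp: topspace_realization)
      then obtain p0 where p0: "p0 \<in> pre_points X" "u = real_rel X `` {p0}" by (auto elim: quotientE)
      have pp: "p \<in> pre_points X" using in_quotient_imp_subset[OF equiv_real uq] u by auto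
      have "(p0, p) \<in> real_rel X" using p0 u by auto
      then have "real_rel X `` {p} = u" using p0(2) equiv_class_eq[OF equiv_real \<open>(p0, p) \<in> real_rel X\<close>] by simp
      then show "p \<in> {x \<in> topspace (pre_top X). rq X x \<in> U}" using pp u by (auto simp: topspace_pre rq_def)
    qed
  qed
  then show "openin (pre_top X) {x \<in> topspace (pre_top X). rq X x \<in> U} = openin (realization X) U"
    using U by (simp add: openin_realization topspace_realization)
qed


lemma cont_prod_pre:
  assumes slice: "\<And>n x. x \<in> simp X n \<Longrightarrow> continuous_map (prod_topology Ist (SX n)) T (\<lambda>(\<tau>,t). G \<tau> (n,x,t))"
  shows "continuous_map (prod_topology Ist (pre_top X)) T (\<lambda>(\<tau>,p). G \<tau> p)"
  unfolding continuous_map_def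
proof (intro conjI allI impI)
  show "(\<lambda>(\<tau>, p). G \<tau> p) \<in> topspace (prod_topology Ist (pre_top X)) \<rightarrow> topspace T"
  proof
    fix z assume "z \<in> topspace (prod_topology Ist (pre_top X))"
    then obtain \<tau> n x t where z: "z = (\<tau>, (n, x, t))" "\<tau> \<in> {0..1}" "x \<in> simp X n" "t \<in> std_simplex n"
      by (auto simp: topspace_pre pre_points_def)
    have ts: "(\<tau>, t) \<in> topspace (prod_topology Ist (SX n))" using z by simp
    have "(\<lambda>(\<tau>,t). G \<tau> (n,x,t)) (\<tau>, t) \<in> topspace T"
      using funcset_mem[OF continuous_map_funspace[OF slice[OF z(3)]] ts] .
    then show "(\<lambda>(\<tau>, p). G \<tau> p) z \<in> topspace T" using z by simp
  qed
next
  fix U assume U: "openin T U"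
  let ?W = "{z \<in> topspace (prod_topology Ist (pre_top X)). (\<lambda>(\<tau>, p). G \<tau> p) z \<in> U}"
  show "openin (prod_topology Ist (pre_top X)) ?W"
    unfolding openin_prod_topology_alt
  proof (intro allI impI)
    fix \<tau> p assume tp: "(\<tau>, p) \<in> ?W"
    then obtain n x t where p: "p = (n, x, t)" "\<tau> \<in> {0..1}" "x \<in> simp X n" "t \<in> std_simplex n"
      by (auto simp: topspace_pre pre_points_def)
    let ?W' = "{z \<in> topspace (prod_topology Ist (SX n)). (\<lambda>(\<tau>,t). G \<tau> (n,x,t)) z \<in> U}"
    have oW': "openin (prod_topology Ist (SX n)) ?W'"
      using openin_continuous_map_preimage[OF slice[OF p(3)] U] .
    have GU: "G \<tau> (n, x, t) \<in> U" using tp p(1) by simp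
    have mem: "(\<tau>, t) \<in> ?W'" using GU p(2,4) by simp
    have "\<forall>a b. (a, b) \<in> ?W' \<longrightarrow> (\<exists>U V. openin Ist U \<and> openin (SX n) V \<and> a \<in> U \<and> b \<in> V \<and> U \<times> V \<subseteq> ?W')"
      using oW' by (simp only: openin_prod_topology_alt)
    from this[rule_format, OF mem]
    obtain U1 V1 where UV: "openin Ist U1" "openin (SX n) V1" "\<tau> \<in> U1" "t \<in> V1" "U1 \<times> V1 \<subseteq> ?W'"
      by blast
    let ?V = "(\<lambda>t'. (n, x, t')) ` V1"
    have V1s: "V1 \<subseteq> std_simplex n" using openin_subset[OF UV(2)] by simp
    have oV: "openin (pre_top X) ?V"
      unfolding openin_pre
    proof (intro conjI allI impI)
      show "?V \<subseteq> pre_points X" using V1s p(3) by (auto simp: pre_points_def)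
      fix n' x' assume "x' \<in> simp X n'"
      show "openin (SX n') {t'. (n', x', t') \<in> ?V}"
      proof (cases "n' = n \<and> x' = x")
        case True
        then have "{t'. (n', x', t') \<in> ?V} = V1" by auto
        then show ?thesis using UV(2) True by simp
      next
        case False
        then have "{t'. (n', x', t') \<in> ?V} = {}" by auto
        then show ?thesis by simp
      qed
    qed
    have "U1 \<times> ?V \<subseteq> ?W"
    proof
      fix z assume "z \<in> U1 \<times> ?V"
      then obtain a b where ab: "z = (a, (n, x, b))" "a \<in> U1" "b \<in> V1" by auto
      then have "(a, b) \<in> ?W'" using UV(5) by auto
      then show "z \<in> ?W" using ab p(3) by (auto simp: topspace_pre pre_points_def)
    qed
    then show "\<exists>U V. openin Ist U \<and> openin (pre_top X) V \<and> \<tau> \<in> U \<and> p \<in> V \<and> U \<times> V \<subseteq> ?W"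
      using UV oV p by blast
  qed
qed

definition realgen :: "'a sset \<Rightarrow> ((nat \<times> 'a \<times> (nat \<Rightarrow> real)) \<times> (nat \<times> 'a \<times> (nat \<Rightarrow> real))) set" where
  "realgen X = {((m, act X m n \<theta> x, t), (n, x, simplex_push m \<theta> t)) | m n \<theta> x t.
        dmor m n \<theta> \<and> x \<in> simp X n \<and> t \<in> std_simplex m}"

lemma real_rel_alt: "real_rel X = equiv_closure_on (pre_points X) (realgen X)"
  unfolding real_rel_def realgen_def ..

lemma resp_star:
  assumes "\<And>p q. (p, q) \<in> R \<Longrightarrow> F p = F q" "(p, q) \<in> (R \<union> R\<inverse>)\<^sup>*"
  shows "F p = F q"
  using assms(2) by (induction rule: rtrancl_induct) (auto dest: assms(1))

lemma resp_real:
  assumes "\<And>m n \<theta> x t. dmor m n \<theta> \<Longrightarrow> x \<in> simp X n \<Longrightarrow> t \<in> std_simplex m \<Longrightarrow>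
        F (m, act X m n \<theta> x, t) = F (n, x, simplex_push m \<theta> t)"
    and "(p, q) \<in> real_rel X"
  shows "F p = F q"
proof -
  have "(p, q) \<in> (realgen X \<union> (realgen X)\<inverse>)\<^sup>*"
    using assms(2) unfolding real_rel_alt equiv_closure_on_def by blast
  then show ?thesis
    by (rule resp_star[rotated]) (auto simp: realgen_def intro: assms(1))
qed

lemma Ist_lc: "locally_compact_space Ist"
  by (simp add: compact_imp_locally_compact_space compact_space_subtopology)

lemma Ist_H: "Hausdorff_space Ist"
  by (simp add: Hausdorff_space_subtopology)

lemma some_in_rq:
  assumes "p \<in> pre_points X"
  shows "(p, SOME p'. p' \<in> rq X p) \<in> real_rel X"
proof -
  have "p \<in> rq X p" unfolding rq_def using equiv_class_self[OF equiv_real assms] .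
  then have "(SOME p'. p' \<in> rq X p) \<in> rq X p" by (rule someI)
  then show ?thesis unfolding rq_def by simp
qed

lemma cont_real:
  assumes slice: "\<And>n x. x \<in> simp X n \<Longrightarrow> continuous_map (prod_topology Ist (SX n)) T (\<lambda>(\<tau>,t). G \<tau> (n,x,t))"
    and resp: "\<And>\<tau> m n \<theta> x t. \<tau> \<in> {0..1} \<Longrightarrow> dmor m n \<theta> \<Longrightarrow> x \<in> simp X n \<Longrightarrow> t \<in> std_simplex m \<Longrightarrow>
        G \<tau> (m, act X m n \<theta> x, t) = G \<tau> (n, x, simplex_push m \<theta> t)"
  shows "continuous_map (prod_topology Ist (realization X)) T (\<lambda>(\<tau>,c). G \<tau> (SOME p. p \<in> c))"
proof (rule continuous_compose_quotient_map)
  show q: "quotient_map (prod_topology Ist (pre_top X)) (prod_topology Ist (realization X)) (\<lambda>(\<tau>,p). (\<tau>, rq X p))"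
    by (rule quotient_map_prod_right[OF Ist_lc _ quotient_rq]) (simp add: Ist_H)
  show "continuous_map (prod_topology Ist (pre_top X)) T ((\<lambda>(\<tau>, c). G \<tau> (SOME p. p \<in> c)) \<circ> (\<lambda>(\<tau>, p). (\<tau>, rq X p)))"
  proof (rule continuous_map_eq[OF cont_prod_pre[OF slice]])
    fix z assume "z \<in> topspace (prod_topology Ist (pre_top X))"
    then obtain \<tau> p where z: "z = (\<tau>, p)" "p \<in> pre_points X" "\<tau> \<in> {0..1}" by (auto simp: topspace_pre)
    have "G \<tau> p = G \<tau> (SOME p'. p' \<in> rq X p)"
      by (rule resp_real[OF resp[OF z(3)] some_in_rq[OF z(2)]])
    then show "(\<lambda>(\<tau>, p). G \<tau> p) z = ((\<lambda>(\<tau>, c). G \<tau> (SOME p. p \<in> c)) \<circ> (\<lambda>(\<tau>, p). (\<tau>, rq X p))) z"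
      using z by simp
  qed auto
qed


abbreviation "CC X \<equiv> copr_sset (simp X 1) Delta1_sset"
abbreviation "BB X \<equiv> copr_sset (simp X 1) J_sset"
definition TR :: "'a sset \<Rightarrow> nat \<Rightarrow> (('a + 'a \<times> (nat \<Rightarrow> nat)) \<times> ('a + 'a \<times> (nat \<Rightarrow> nat))) set" where
  "TR X n = po_rel (CC X) X (BB X) (classify_map X) (\<lambda>n p. p) n"
definition tc :: "'a sset \<Rightarrow> nat \<Rightarrow> 'a + 'a \<times> (nat \<Rightarrow> nat) \<Rightarrow> ('a + 'a \<times> (nat \<Rightarrow> nat)) set" where
  "tc X n z = TR X n `` {z}"
abbreviation "TS X n \<equiv> simp X n <+> simp (BB X) n"
definition jact :: "nat \<Rightarrow> (nat \<Rightarrow> nat) \<Rightarrow> (nat \<Rightarrow> nat) \<Rightarrow> (nat \<Rightarrow> nat)" where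
  "jact m \<theta> s = (\<lambda>i. if i \<le> m then s (\<theta> i) else 0)"
definition TG :: "'a sset \<Rightarrow> nat \<Rightarrow> (('a + 'a \<times> (nat \<Rightarrow> nat)) \<times> ('a + 'a \<times> (nat \<Rightarrow> nat))) set" where
  "TG X n = {(Inl (act X n 1 s \<sigma>), Inr (\<sigma>, s)) | \<sigma> s. \<sigma> \<in> simp X 1 \<and> s \<in> simp Delta1_sset n}"

lemma TR_alt: "TR X n = equiv_closure_on (TS X n) (TG X n)"
  unfolding TR_def po_rel_def TG_def classify_map_def copr_sset_def by auto

lemma simp_J: "s \<in> simp J_sset n \<longleftrightarrow> (\<forall>i\<le>n. s i \<le> 1) \<and> (\<forall>i>n. s i = 0)"
  by (simp add: J_sset_def)
lemma simp_D: "s \<in> simp Delta1_sset n \<longleftrightarrow> dmor n 1 s \<and> (\<forall>i>n. s i = 0)"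
  by (simp add: Delta1_sset_def)
lemma act_J: "act J_sset m n \<theta> s = jact m \<theta> s" by (simp add: J_sset_def jact_def)
lemma act_D: "act Delta1_sset m n \<theta> s = jact m \<theta> s" by (simp add: Delta1_sset_def jact_def)
lemma simp_copr: "simp (copr_sset I Y) n = I \<times> simp Y n" by (simp add: copr_sset_def)
lemma act_copr: "act (copr_sset I Y) m n \<theta> p = (fst p, act Y m n \<theta> (snd p))" by (simp add: copr_sset_def)

lemma sum_act_Inl: "sum_act A B m n \<theta> (Inl a) = Inl (act A m n \<theta> a)" by (simp add: sum_act_def)
lemma sum_act_Inr: "sum_act X (copr_sset I J_sset) m n \<theta> (Inr (\<sigma>, s)) = Inr (\<sigma>, jact m \<theta> s)"
  by (simp add: sum_act_def act_copr act_J)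

lemma D_sub_J: "s \<in> simp Delta1_sset n \<Longrightarrow> s \<in> simp J_sset n"
  unfolding simp_D simp_J dmor_def by auto

lemma jact_J: "dmor m n \<theta> \<Longrightarrow> s \<in> simp J_sset n \<Longrightarrow> jact m \<theta> s \<in> simp J_sset m"
  unfolding simp_J dmor_def jact_def by auto

lemma jact_D: "dmor m n \<theta> \<Longrightarrow> s \<in> simp Delta1_sset n \<Longrightarrow> jact m \<theta> s \<in> simp Delta1_sset m"
  unfolding simp_D dmor_def jact_def by auto

lemma jact_dmor: "dmor m n \<theta> \<Longrightarrow> dmor n 1 s \<Longrightarrow> dmor m 1 (jact m \<theta> s)"
  unfolding dmor_def jact_def by auto

lemma sset_axioms:
  assumes "is_sset X"
  shows "\<And>m n \<theta> x. dmor m n \<theta> \<Longrightarrow> x \<in> simp X n \<Longrightarrow> act X m n \<theta> x \<in> simp X m"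
    and "\<And>n x. x \<in> simp X n \<Longrightarrow> act X n n id x = x"
    and "\<And>m n p \<theta> \<phi> x. dmor m n \<theta> \<Longrightarrow> dmor n p \<phi> \<Longrightarrow> x \<in> simp X p \<Longrightarrow>
        act X m n \<theta> (act X n p \<phi> x) = act X m p (\<phi> \<circ> \<theta>) x"
    and "\<And>m n \<theta> \<theta>' x. (\<And>i. i \<le> m \<Longrightarrow> \<theta> i = \<theta>' i) \<Longrightarrow> act X m n \<theta> x = act X m n \<theta>' x"
  using assms unfolding is_sset_def by blast+

lemma act_X_jact:
  assumes X: "is_sset X" and th: "dmor m n \<theta>" and s: "dmor n 1 s" and x: "x \<in> simp X 1"
  shows "act X m n \<theta> (act X n 1 s x) = act X m 1 (jact m \<theta> s) x"
proof -
  have "act X m n \<theta> (act X n 1 s x) = act X m 1 (s \<circ> \<theta>) x"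
    using sset_axioms(3)[OF X th s x] .
  also have "\<dots> = act X m 1 (jact m \<theta> s) x"
    by (rule sset_axioms(4)[OF X]) (simp add: jact_def)
  finally show ?thesis .
qed

lemma sum_act_TS:
  assumes X: "is_sset X" and th: "dmor m n \<theta>" and z: "z \<in> TS X n"
  shows "sum_act X (BB X) m n \<theta> z \<in> TS X m"
proof (cases z)
  case (Inl a)
  then show ?thesis using z sset_axioms(1)[OF X th] by (auto simp: sum_act_Inl)
next
  case (Inr b)
  then obtain \<sigma> s where b: "b = (\<sigma>, s)" by (cases b)
  then show ?thesis using z Inr jact_J[OF th] by (auto simp: sum_act_Inr simp_copr)
qed

lemma TG_compat:
  assumes X: "is_sset X" and th: "dmor m n \<theta>" and g: "(z, z') \<in> TG X n"
  shows "(sum_act X (BB X) m n \<theta> z, sum_act X (BB X) m n \<theta> z') \<in> TG X m"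
proof -
  obtain \<sigma> s where zz: "z = Inl (act X n 1 s \<sigma>)" "z' = Inr (\<sigma>, s)" "\<sigma> \<in> simp X 1" "s \<in> simp Delta1_sset n"
    using g unfolding TG_def by blast
  have sd: "dmor n 1 s" using zz(4) simp_D by blast
  have "sum_act X (BB X) m n \<theta> z = Inl (act X m 1 (jact m \<theta> s) \<sigma>)"
    using zz act_X_jact[OF X th sd zz(3)] by (simp add: sum_act_Inl)
  moreover have "sum_act X (BB X) m n \<theta> z' = Inr (\<sigma>, jact m \<theta> s)"
    using zz by (simp add: sum_act_Inr)
  moreover have "jact m \<theta> s \<in> simp Delta1_sset m" using jact_D[OF th zz(4)] .
  ultimately show ?thesis using zz(3) unfolding TG_def by blast
qed

lemma TR_compat:
  assumes X: "is_sset X" and th: "dmor m n \<theta>" and r: "(z, z') \<in> TR X n"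
  shows "(sum_act X (BB X) m n \<theta> z, sum_act X (BB X) m n \<theta> z') \<in> TR X m"
proof -
  let ?f = "sum_act X (BB X) m n \<theta>"
  have r1: "(z, z') \<in> (TG X n \<union> (TG X n)\<inverse>)\<^sup>*" and zs: "z \<in> TS X n" "z' \<in> TS X n"
    using r unfolding TR_alt equiv_closure_on_def by auto
  have "(?f z, ?f z') \<in> (TG X m \<union> (TG X m)\<inverse>)\<^sup>*"
    using r1
  proof (induction rule: rtrancl_induct)
    case base then show ?case by simp
  next
    case (step y w)
    then have "(?f y, ?f w) \<in> TG X m \<union> (TG X m)\<inverse>"
      using TG_compat[OF X th] by blast
    then show ?case using step.IH by (rule rtrancl_into_rtrancl[rotated])
  qed
  then show ?thesis using sum_act_TS[OF X th] zs unfolding TR_alt equiv_closure_on_def by blast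
qed

lemma equiv_TR: "equiv (TS X n) (TR X n)"
  unfolding TR_alt by (rule equiv_closure_on_equiv)

lemma simp_tilde: "simp (tildeX X) n = TS X n // TR X n"
  unfolding tildeX_def sset_pushout_def TR_def by simp

lemma tc_in: "z \<in> TS X n \<Longrightarrow> tc X n z \<in> simp (tildeX X) n"
  unfolding simp_tilde tc_def by (rule quotientI)

lemma tc_self: "z \<in> TS X n \<Longrightarrow> z \<in> tc X n z"
  unfolding tc_def by (rule equiv_class_self[OF equiv_TR])

lemma tc_eq: "(z, z') \<in> TR X n \<Longrightarrow> tc X n z = tc X n z'"
  unfolding tc_def by (rule equiv_class_eq[OF equiv_TR])

lemma act_tc:
  assumes X: "is_sset X" and th: "dmor m n \<theta>" and z: "z \<in> TS X n"
  shows "act (tildeX X) m n \<theta> (tc X n z) = tc X m (sum_act X (BB X) m n \<theta> z)"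
proof -
  let ?z' = "SOME z'. z' \<in> tc X n z"
  have "?z' \<in> tc X n z" using tc_self[OF z] by (rule someI)
  then have "(z, ?z') \<in> TR X n" unfolding tc_def by simp
  then have "(sum_act X (BB X) m n \<theta> z, sum_act X (BB X) m n \<theta> ?z') \<in> TR X m"
    by (rule TR_compat[OF X th])
  then have "tc X m (sum_act X (BB X) m n \<theta> z) = tc X m (sum_act X (BB X) m n \<theta> ?z')"
    by (rule tc_eq)
  then show ?thesis
    unfolding tildeX_def sset_pushout_def by (simp add: tc_def TR_def)
qed

lemma glue:
  assumes X: "is_sset X" and "\<sigma> \<in> simp X 1" "s \<in> simp Delta1_sset n"
  shows "tc X n (Inr (\<sigma>, s)) = tc X n (Inl (act X n 1 s \<sigma>))"
proof -
  have g: "(Inl (act X n 1 s \<sigma>), Inr (\<sigma>, s)) \<in> TG X n" using assms unfolding TG_def by blast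
  then have "Inl (act X n 1 s \<sigma>) \<in> TS X n" "Inr (\<sigma>, s) \<in> TS X n"
    using assms(2,3) D_sub_J sset_axioms(1)[OF X, of n 1 s \<sigma>] by (auto simp: simp_copr simp_D)
  then have "(Inl (act X n 1 s \<sigma>), Inr (\<sigma>, s)) \<in> TR X n"
    using g unfolding TR_alt equiv_closure_on_def by blast
  then show ?thesis by (rule tc_eq[symmetric])
qed

definition kappa :: "'a sset \<Rightarrow> nat \<Rightarrow> 'a + 'a \<times> (nat \<Rightarrow> nat) \<Rightarrow> 'a" where
  "kappa X n z = (case z of Inl x \<Rightarrow> x | Inr p \<Rightarrow> act X n 1 (snd p) (fst p))"

lemma TR_inl:
  assumes "(Inl x, Inl y) \<in> TR X n"
  shows "x = y"
proof -
  have r1: "(Inl x, Inl y) \<in> (TG X n \<union> (TG X n)\<inverse>)\<^sup>*"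
    using assms unfolding TR_alt equiv_closure_on_def by auto
  have "kappa X n (Inl x) = kappa X n (Inl y)"
    by (rule resp_star[OF _ r1]) (auto simp: TG_def kappa_def)
  then show ?thesis by (simp add: kappa_def)
qed

lemma incl_tc: "tilde_incl X n x = tc X n (Inl x)"
  unfolding tilde_incl_def po_inl_def tc_def TR_def ..

lemma incl_map: assumes X: "is_sset X" shows "sset_map X (tildeX X) (tilde_incl X)"
  unfolding sset_map_def
proof (intro conjI allI impI)
  fix n x assume "x \<in> simp X n"
  then show "tilde_incl X n x \<in> simp (tildeX X) n" unfolding incl_tc by (intro tc_in InlI)
next
  fix m n \<theta> x assume th: "dmor m n \<theta>" and x: "x \<in> simp X n"
  show "tilde_incl X m (act X m n \<theta> x) = act (tildeX X) m n \<theta> (tilde_incl X n x)"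
    unfolding incl_tc using act_tc[OF X th InlI[OF x]] by (simp add: sum_act_Inl)
qed

lemma incl_mono: assumes X: "is_sset X" shows "sset_mono X (tildeX X) (tilde_incl X)"
  unfolding sset_mono_def
proof (intro conjI allI incl_map[OF X])
  fix n show "inj_on (tilde_incl X n) (simp X n)"
  proof (rule inj_onI)
    fix x y assume xy: "x \<in> simp X n" "y \<in> simp X n" "tilde_incl X n x = tilde_incl X n y"
    have "Inl y \<in> tc X n (Inl y)" using xy(2) by (intro tc_self InlI)
    then have "Inl y \<in> tc X n (Inl x)" using xy(3) unfolding incl_tc by simp
    then show "x = y" unfolding tc_def by (auto intro: TR_inl)
  qed
qed


definition sq0 :: "nat \<Rightarrow> nat \<Rightarrow> nat" where "sq0 a = (\<lambda>i. if i = 0 then a else 0)"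
definition sq1 :: "nat \<Rightarrow> nat \<Rightarrow> nat \<Rightarrow> nat" where "sq1 a b = (\<lambda>i. if i = 0 then a else if i = 1 then b else 0)"
definition sq2 :: "nat \<Rightarrow> nat \<Rightarrow> nat \<Rightarrow> nat \<Rightarrow> nat" where
  "sq2 a b c = (\<lambda>i. if i = 0 then a else if i = 1 then b else if i = 2 then c else 0)"

abbreviation "VV X \<sigma> a \<equiv> tc X 0 (Inr (\<sigma>, sq0 a))"
abbreviation "EE X \<sigma> a b \<equiv> tc X 1 (Inr (\<sigma>, sq1 a b))"

lemma Inl_Plus[simp]: "Inl a \<in> A <+> B \<longleftrightarrow> a \<in> A" by (auto simp: Plus_def)
lemma Inr_Plus[simp]: "Inr b \<in> A <+> B \<longleftrightarrow> b \<in> B" by (auto simp: Plus_def)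

lemma sq0_J: "a \<le> 1 \<Longrightarrow> sq0 a \<in> simp J_sset 0" by (simp add: simp_J sq0_def)
lemma sq1_J: "a \<le> 1 \<Longrightarrow> b \<le> 1 \<Longrightarrow> sq1 a b \<in> simp J_sset 1" by (simp add: simp_J sq1_def)
lemma sq2_J: "a \<le> 1 \<Longrightarrow> b \<le> 1 \<Longrightarrow> c \<le> 1 \<Longrightarrow> sq2 a b c \<in> simp J_sset 2" by (simp add: simp_J sq2_def)

lemma inr_TS: "\<sigma> \<in> simp X 1 \<Longrightarrow> s \<in> simp J_sset n \<Longrightarrow> Inr (\<sigma>, s) \<in> TS X n"
  unfolding simp_copr by (intro InrI SigmaI)

lemma dmor_face: "k \<le> 2 \<Longrightarrow> dmor 1 2 (\<lambda>j. if j < k then j else j + 1)" by (auto simp: dmor_def)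
lemma dmor_const: "k \<le> n \<Longrightarrow> dmor 0 n (\<lambda>_. k)" by (auto simp: dmor_def)
lemma dmor_deg: "dmor 1 0 (\<lambda>_. 0)" by (auto simp: dmor_def)

lemma J1_form: "s \<in> simp J_sset 1 \<Longrightarrow> s = sq1 (s 0) (s 1) \<and> s 0 \<le> 1 \<and> s 1 \<le> 1"
  by (auto simp: simp_J sq1_def)

lemma src_E:
  assumes X: "is_sset X" and "\<sigma> \<in> simp X 1" "a \<le> 1" "b \<le> 1"
  shows "src1 (tildeX X) (EE X \<sigma> a b) = VV X \<sigma> a"
proof -
  have "src1 (tildeX X) (EE X \<sigma> a b) = tc X 0 (Inr (\<sigma>, jact 0 (\<lambda>_. 0) (sq1 a b)))"
    unfolding src1_def using act_tc[OF X dmor_const[of 0 1] inr_TS[OF assms(2) sq1_J[OF assms(3,4)]]]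
    by (simp add: sum_act_Inr)
  also have "jact 0 (\<lambda>_. 0) (sq1 a b) = sq0 a" by (auto simp: jact_def sq1_def sq0_def)
  finally show ?thesis .
qed

lemma tgt_E:
  assumes X: "is_sset X" and "\<sigma> \<in> simp X 1" "a \<le> 1" "b \<le> 1"
  shows "tgt1 (tildeX X) (EE X \<sigma> a b) = VV X \<sigma> b"
proof -
  have "tgt1 (tildeX X) (EE X \<sigma> a b) = tc X 0 (Inr (\<sigma>, jact 0 (\<lambda>_. 1) (sq1 a b)))"
    unfolding tgt1_def using act_tc[OF X dmor_const[of 1 1] inr_TS[OF assms(2) sq1_J[OF assms(3,4)]]]
    by (simp add: sum_act_Inr)
  also have "jact 0 (\<lambda>_. 1) (sq1 a b) = sq0 b" by (auto simp: jact_def sq1_def sq0_def)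
  finally show ?thesis .
qed

lemma deg_V:
  assumes X: "is_sset X" and "\<sigma> \<in> simp X 1" "a \<le> 1"
  shows "degen0 (tildeX X) (VV X \<sigma> a) = EE X \<sigma> a a"
proof -
  have "degen0 (tildeX X) (VV X \<sigma> a) = tc X 1 (Inr (\<sigma>, jact 1 (\<lambda>_. 0) (sq0 a)))"
    unfolding degen0_def using act_tc[OF X dmor_deg inr_TS[OF assms(2) sq0_J[OF assms(3)]]]
    by (simp add: sum_act_Inr)
  also have "jact 1 (\<lambda>_. 0) (sq0 a) = sq1 a a" by (auto simp: jact_def sq1_def sq0_def)
  finally show ?thesis .
qed

lemma tri_rel:
  assumes X: "is_sset X" and s: "\<sigma> \<in> simp X 1" and abc: "a \<le> 1" "b \<le> 1" "c \<le> 1"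
  shows "hrel (tildeX X) (VV X \<sigma> a) (VV X \<sigma> c) [EE X \<sigma> a c] [EE X \<sigma> a b, EE X \<sigma> b c]"
proof -
  let ?z = "Inr (\<sigma>, sq2 a b c)"
  have z: "?z \<in> TS X 2" by (rule inr_TS[OF s sq2_J[OF abc]])
  have t: "tc X 2 ?z \<in> simp (tildeX X) 2" by (rule tc_in[OF z])
  have f: "face2 (tildeX X) k (tc X 2 ?z) = tc X 1 (Inr (\<sigma>, jact 1 (\<lambda>j. if j < k then j else j + 1) (sq2 a b c)))"
    if "k \<le> 2" for k
    unfolding face2_def using act_tc[OF X dmor_face[OF that] z] by (simp add: sum_act_Inr)
  have v: "vert2 (tildeX X) k (tc X 2 ?z) = tc X 0 (Inr (\<sigma>, jact 0 (\<lambda>_. k) (sq2 a b c)))"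
    if "k \<le> 2" for k
    unfolding vert2_def using act_tc[OF X dmor_const[OF that] z] by (simp add: sum_act_Inr)
  have e1: "jact 1 (\<lambda>j. if j < 1 then j else j + 1) (sq2 a b c) = sq1 a c"
    by (auto simp: jact_def sq1_def sq2_def)
  have e2: "jact 1 (\<lambda>j. if j < 2 then j else j + 1) (sq2 a b c) = sq1 a b"
    by (auto simp: jact_def sq1_def sq2_def)
  have e0: "jact 1 (\<lambda>j. if j < 0 then j else j + 1) (sq2 a b c) = sq1 b c"
    by (auto simp: jact_def sq1_def sq2_def)
  have v0: "jact 0 (\<lambda>_. 0) (sq2 a b c) = sq0 a" by (auto simp: jact_def sq0_def sq2_def)
  have v2: "jact 0 (\<lambda>_. 2) (sq2 a b c) = sq0 c" by (auto simp: jact_def sq0_def sq2_def)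
  have F0: "face2 (tildeX X) 0 (tc X 2 ?z) = EE X \<sigma> b c" using f[of 0] e0 by simp
  have F1: "face2 (tildeX X) 1 (tc X 2 ?z) = EE X \<sigma> a c" using f[of 1] e1 by simp
  have F2: "face2 (tildeX X) 2 (tc X 2 ?z) = EE X \<sigma> a b" using f[of 2] e2 by simp
  have V0: "vert2 (tildeX X) 0 (tc X 2 ?z) = VV X \<sigma> a" using v[of 0] v0 by simp
  have V2: "vert2 (tildeX X) 2 (tc X 2 ?z) = VV X \<sigma> c" using v[of 2] v2 by simp
  have "hrel (tildeX X) (vert2 (tildeX X) 0 (tc X 2 ?z)) (vert2 (tildeX X) 2 (tc X 2 ?z))
     [face2 (tildeX X) 1 (tc X 2 ?z)] [face2 (tildeX X) 2 (tc X 2 ?z), face2 (tildeX X) 0 (tc X 2 ?z)]"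
    by (rule htri[OF t])
  then show ?thesis
    unfolding F0 F1 F2 V0 V2 .
qed

lemma path_start: "is_path X x p y \<Longrightarrow> x \<in> simp X 0"
  by (cases p) auto

lemma path_end: "is_path X x p y \<Longrightarrow> y \<in> simp X 0"
  by (induction p arbitrary: x) auto

lemma path_append: "is_path X x p y \<Longrightarrow> is_path X y q z \<Longrightarrow> is_path X x (p @ q) z"
  by (induction p arbitrary: x) auto

lemma path_single: "e \<in> simp X 1 \<Longrightarrow> src1 X e = x \<Longrightarrow> x \<in> simp X 0 \<Longrightarrow> tgt1 X e = y \<Longrightarrow> y \<in> simp X 0
  \<Longrightarrow> is_path X x [e] y"
  by simp

lemma edge_form:
  assumes X: "is_sset X" and e: "e \<in> simp (tildeX X) 1"
  shows "\<exists>\<sigma> a b. \<sigma> \<in> simp X 1 \<and> a \<le> 1 \<and> b \<le> 1 \<and> e = EE X \<sigma> a b"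
proof -
  from e[unfolded simp_tilde] obtain z where z0: "e = TR X 1 `` {z}" "z \<in> TS X 1" by (rule quotientE)
  then have z: "z \<in> TS X 1" "e = tc X 1 z" by (simp_all add: tc_def)
  show ?thesis
  proof (cases z)
    case (Inl x)
    then have x: "x \<in> simp X 1" using z(1) by simp
    have d: "sq1 0 1 \<in> simp Delta1_sset 1" by (auto simp: simp_D dmor_def sq1_def)
    have "act X 1 1 (sq1 0 1) x = act X 1 1 id x"
      by (rule sset_axioms(4)[OF X]) (auto simp: sq1_def)
    also have "\<dots> = x" using sset_axioms(2)[OF X x] .
    finally have "EE X x 0 1 = e" using glue[OF X x d] z(2) Inl by simp
    then have "x \<in> simp X 1 \<and> (0::nat) \<le> 1 \<and> (1::nat) \<le> 1 \<and> e = EE X x 0 1" using x by simp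
    then show ?thesis by blast
  next
    case (Inr p)
    obtain \<sigma> s where p: "p = (\<sigma>, s)" by (cases p)
    then have ps: "\<sigma> \<in> simp X 1" "s \<in> simp J_sset 1" using z(1) Inr by (simp_all add: simp_copr)
    have "e = EE X \<sigma> (s 0) (s 1)" using J1_form[OF ps(2)] z(2) Inr p by simp
    then have "\<sigma> \<in> simp X 1 \<and> s 0 \<le> 1 \<and> s 1 \<le> 1 \<and> e = EE X \<sigma> (s 0) (s 1)" using ps J1_form[OF ps(2)] by simp
    then show ?thesis by blast
  qed
qed

lemma V_in: "\<sigma> \<in> simp X 1 \<Longrightarrow> a \<le> 1 \<Longrightarrow> VV X \<sigma> a \<in> simp (tildeX X) 0"
  by (rule tc_in[OF inr_TS[OF _ sq0_J]])
lemma E_in: "\<sigma> \<in> simp X 1 \<Longrightarrow> a \<le> 1 \<Longrightarrow> b \<le> 1 \<Longrightarrow> EE X \<sigma> a b \<in> simp (tildeX X) 1"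
  by (rule tc_in[OF inr_TS[OF _ sq1_J]])

lemma EE_inv:
  assumes X: "is_sset X" and s: "\<sigma> \<in> simp X 1" and ab: "a \<le> 1" "b \<le> 1"
  shows "hrel (tildeX X) (VV X \<sigma> a) (VV X \<sigma> a) [EE X \<sigma> a b, EE X \<sigma> b a] []"
proof -
  have 1: "hrel (tildeX X) (VV X \<sigma> a) (VV X \<sigma> a) [EE X \<sigma> a a] [EE X \<sigma> a b, EE X \<sigma> b a]"
    by (rule tri_rel[OF X s ab(1) ab(2) ab(1)])
  have "hrel (tildeX X) (VV X \<sigma> a) (VV X \<sigma> a) [degen0 (tildeX X) (VV X \<sigma> a)] []"
    by (rule hdeg[OF V_in[OF s ab(1)]])
  then have 2: "hrel (tildeX X) (VV X \<sigma> a) (VV X \<sigma> a) [EE X \<sigma> a a] []"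
    unfolding deg_V[OF X s ab(1)] .
  show ?thesis by (rule htrans[OF hsym[OF 1] 2])
qed

lemma edge_inv:
  assumes X: "is_sset X" and e: "e \<in> simp (tildeX X) 1"
  shows "\<exists>e'. is_path (tildeX X) (tgt1 (tildeX X) e) [e'] (src1 (tildeX X) e) \<and>
     hrel (tildeX X) (src1 (tildeX X) e) (src1 (tildeX X) e) [e, e'] [] \<and>
     hrel (tildeX X) (tgt1 (tildeX X) e) (tgt1 (tildeX X) e) [e', e] []"
proof -
  obtain \<sigma> a b where f: "\<sigma> \<in> simp X 1" "a \<le> 1" "b \<le> 1" "e = EE X \<sigma> a b"
    using edge_form[OF X e] by blast
  have "is_path (tildeX X) (VV X \<sigma> b) [EE X \<sigma> b a] (VV X \<sigma> a)"
    using path_single E_in V_in src_E tgt_E X f by metis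
  then show ?thesis
    using f src_E[OF X f(1-3)] tgt_E[OF X f(1-3)] EE_inv[OF X f(1) f(2,3)] EE_inv[OF X f(1) f(3,2)]
    by auto
qed

lemma groupoid: assumes X: "is_sset X" shows "hocat_is_groupoid (tildeX X)"
  unfolding hocat_is_groupoid_def
proof (intro allI impI)
  fix x p y
  assume "is_path (tildeX X) x p y"
  then show "\<exists>q. is_path (tildeX X) y q x \<and> hrel (tildeX X) x x (p @ q) [] \<and> hrel (tildeX X) y y (q @ p) []"
  proof (induction p arbitrary: x)
    case Nil
    then have "x = y" "is_path (tildeX X) x [] x" by auto
    then show ?case using hrefl by fastforce
  next
    case (Cons e p)
    let ?T = "tildeX X"
    have e: "e \<in> simp ?T 1" "src1 ?T e = x" "x \<in> simp ?T 0" "is_path ?T (tgt1 ?T e) p y"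
      using Cons.prems by auto
    obtain q' where q': "is_path ?T y q' (tgt1 ?T e)" "hrel ?T (tgt1 ?T e) (tgt1 ?T e) (p @ q') []"
      "hrel ?T y y (q' @ p) []"
      using Cons.IH[OF e(4)] by blast
    obtain e' where e': "is_path ?T (tgt1 ?T e) [e'] (src1 ?T e)" "hrel ?T (src1 ?T e) (src1 ?T e) [e, e'] []"
      "hrel ?T (tgt1 ?T e) (tgt1 ?T e) [e', e] []"
      using edge_inv[OF X e(1)] by blast
    have pe: "is_path ?T x [e] (tgt1 ?T e)" using e path_start[OF e(4)] by simp
    have pe': "is_path ?T (tgt1 ?T e) [e'] x" using e' e(2) e(3) by simp
    have "hrel ?T x x ([e] @ (p @ q') @ [e']) ([e] @ [] @ [e'])"
      by (rule hcong[OF q'(2) pe pe'])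
    then have h1: "hrel ?T x x ((e # p) @ q' @ [e']) [e, e']" by simp
    have "hrel ?T y y (q' @ [e', e] @ p) (q' @ [] @ p)"
      by (rule hcong[OF e'(3) q'(1) e(4)])
    then have h2: "hrel ?T y y ((q' @ [e']) @ e # p) (q' @ p)" by simp
    show ?case
    proof (intro exI conjI)
      show "is_path ?T y (q' @ [e']) x" by (rule path_append[OF q'(1) pe'])
      show "hrel ?T x x ((e # p) @ q' @ [e']) []" using htrans[OF h1] e'(2) e(2) by simp
      show "hrel ?T y y ((q' @ [e']) @ e # p) []" by (rule htrans[OF h2 q'(3)])
    qed
  qed
qed


lemma sum_filter: "sum f {i. i \<le> (N::nat) \<and> Q i} = (\<Sum>i\<le>N. if Q i then f i else 0)"
proof -
  have "{i. i \<le> N \<and> Q i} = {x \<in> {..N}. Q x}" by auto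
  then have "sum f {i. i \<le> N \<and> Q i} = sum f {x \<in> {..N}. Q x}" by simp
  also have "\<dots> = (\<Sum>i\<le>N. if Q i then f i else 0)" by (rule sum.inter_filter) simp
  finally show ?thesis .
qed

lemma split3: "sum (f :: nat \<Rightarrow> real) {i. i \<le> Suc (Suc n) \<and> Q i} = (if Q 0 then f 0 else 0)
   + sum (\<lambda>i. f (Suc i)) {i. i \<le> n \<and> Q (Suc i)} + (if Q (Suc (Suc n)) then f (Suc (Suc n)) else 0)"
proof -
  let ?g = "\<lambda>i. if Q i then f i else 0"
  have "(\<Sum>i\<le>Suc (Suc n). ?g i) = (\<Sum>i\<le>Suc n. ?g i) + ?g (Suc (Suc n))" by (rule sum.atMost_Suc)
  also have "(\<Sum>i\<le>Suc n. ?g i) = ?g 0 + (\<Sum>i\<le>n. ?g (Suc i))" by (rule sum.atMost_Suc_shift)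
  finally show ?thesis unfolding sum_filter by simp
qed

lemma sum_shift1: "sum (f :: nat \<Rightarrow> real) {i. i \<le> Suc n \<and> Q i} = (if Q 0 then f 0 else 0)
   + sum (\<lambda>i. f (Suc i)) {i. i \<le> n \<and> Q (Suc i)}"
proof -
  let ?g = "\<lambda>i. if Q i then f i else 0"
  have "(\<Sum>i\<le>Suc n. ?g i) = ?g 0 + (\<Sum>i\<le>n. ?g (Suc i))" by (rule sum.atMost_Suc_shift)
  then show ?thesis unfolding sum_filter by simp
qed

lemma push_sum:
  assumes th: "dmor m n \<theta>"
  shows "sum (simplex_push m \<theta> t) {j. j \<le> n \<and> P j} = sum t {i. i \<le> m \<and> P (\<theta> i)}"
proof -
  let ?S = "{i. i \<le> m \<and> P (\<theta> i)}" and ?T = "{j. j \<le> n \<and> P j}"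
  have sub: "\<theta> ` ?S \<subseteq> ?T" using th unfolding dmor_def by auto
  have "sum (simplex_push m \<theta> t) ?T = (\<Sum>y\<in>?T. sum t {x. x \<in> ?S \<and> \<theta> x = y})"
    unfolding simplex_push_def
  proof (rule sum.cong[OF refl])
    fix y assume "y \<in> ?T"
    then have "{i. i \<le> m \<and> \<theta> i = y} = {x. x \<in> ?S \<and> \<theta> x = y}" by auto
    then show "sum t {i. i \<le> m \<and> \<theta> i = y} = sum t {x. x \<in> ?S \<and> \<theta> x = y}" by simp
  qed
  also have "\<dots> = sum t ?S" by (rule sum.group[OF _ _ sub]) auto
  finally show ?thesis .
qed

lemma std_simplexI: "(\<And>i. 0 \<le> t i) \<Longrightarrow> (\<And>i. i > n \<Longrightarrow> t i = 0) \<Longrightarrow> sum t {..n} = 1 \<Longrightarrow> t \<in> std_simplex n"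
  unfolding std_simplex_def by blast

lemma std_simplexD: assumes "t \<in> std_simplex n"
  shows "0 \<le> t i" "i > n \<Longrightarrow> t i = 0" "sum t {..n} = 1"
  using assms unfolding std_simplex_def by auto

lemma push_simplex:
  assumes th: "dmor m n \<theta>" and t: "t \<in> std_simplex m"
  shows "simplex_push m \<theta> t \<in> std_simplex n"
proof (rule std_simplexI)
  fix j show "0 \<le> simplex_push m \<theta> t j"
    unfolding simplex_push_def using std_simplexD(1)[OF t] by (simp add: sum_nonneg)
next
  fix j assume "j > n"
  then have e: "{i. i \<le> m \<and> \<theta> i = j} = {}" using th unfolding dmor_def by fastforce
  show "simplex_push m \<theta> t j = 0" unfolding simplex_push_def e by simp
next
  have "sum (simplex_push m \<theta> t) {j. j \<le> n \<and> True} = sum t {i. i \<le> m \<and> True}"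
    by (rule push_sum[OF th])
  then show "sum (simplex_push m \<theta> t) {..n} = 1"
    using std_simplexD(3)[OF t] by (simp add: atMost_def)
qed

lemma simplex1_eq:
  assumes "p \<in> std_simplex 1" "q \<in> std_simplex 1" "p 0 = q 0"
  shows "p = q"
proof
  fix i
  have "p 0 + p 1 = 1" "q 0 + q 1 = 1" using std_simplexD(3)[OF assms(1)] std_simplexD(3)[OF assms(2)]
    by (simp_all add: numeral_2_eq_2)
  then show "p i = q i"
    using assms(3) std_simplexD(2)[OF assms(1), of i] std_simplexD(2)[OF assms(2), of i]
    by (cases "i = 0"; cases "i = 1") auto
qed

lemma rq_gen:
  assumes th: "dmor m n \<theta>" and c: "c \<in> simp Y n" and ac: "act Y m n \<theta> c \<in> simp Y m"
    and t: "t \<in> std_simplex m"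
  shows "rq Y (m, act Y m n \<theta> c, t) = rq Y (n, c, simplex_push m \<theta> t)"
proof -
  have g: "((m, act Y m n \<theta> c, t), (n, c, simplex_push m \<theta> t)) \<in> realgen Y"
    unfolding realgen_def using th c t by blast
  have "(m, act Y m n \<theta> c, t) \<in> pre_points Y" using ac t by (simp add: pre_points_def)
  moreover have "(n, c, simplex_push m \<theta> t) \<in> pre_points Y"
    using c push_simplex[OF th t] by (simp add: pre_points_def)
  ultimately have "((m, act Y m n \<theta> c, t), (n, c, simplex_push m \<theta> t)) \<in> real_rel Y"
    using g unfolding real_rel_alt equiv_closure_on_def by blast
  then show ?thesis unfolding rq_def by (rule equiv_class_eq[OF equiv_real])
qed

lemma slice_pre:
  assumes c: "c \<in> simp Y N"
  shows "continuous_map (SX N) (pre_top Y) (\<lambda>t. (N, c, t))"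
  unfolding continuous_map_def
proof (intro conjI allI impI)
  show "(\<lambda>t. (N, c, t)) \<in> topspace (SX N) \<rightarrow> topspace (pre_top Y)"
    using c by (auto simp: topspace_pre pre_points_def)
next
  fix U assume U: "openin (pre_top Y) U"
  then have o: "openin (SX N) {t. (N, c, t) \<in> U}" using c unfolding openin_pre by blast
  have "{t. (N, c, t) \<in> U} \<subseteq> std_simplex N"
    using U unfolding openin_pre pre_points_def by blast
  then have "{x \<in> topspace (SX N). (N, c, x) \<in> U} = {t. (N, c, t) \<in> U}" by auto
  then show "openin (SX N) {x \<in> topspace (SX N). (N, c, x) \<in> U}" using o by simp
qed

lemma comp_cont:
  assumes c: "c \<in> simp Y N" and F: "continuous_map Z (SX N) F"
  shows "continuous_map Z (realization Y) (\<lambda>z. rq Y (N, c, F z))"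
proof -
  have "continuous_map Z (realization Y) (rq Y \<circ> (\<lambda>t. (N, c, t)) \<circ> F)"
    by (intro continuous_map_compose[OF F] continuous_map_compose[OF slice_pre[OF c]]
        quotient_imp_continuous_map[OF quotient_rq])
  then show ?thesis by (simp add: o_def)
qed

lemma cont_SX:
  assumes "\<And>k. continuous_map Z euclideanreal (\<lambda>z. F z k)" "\<And>z. z \<in> topspace Z \<Longrightarrow> F z \<in> std_simplex N"
  shows "continuous_map Z (SX N) F"
  unfolding continuous_map_in_subtopology continuous_map_componentwise_UNIV
  using assms by auto

lemma cont_proj: "continuous_map (prod_topology Ist (SX n)) euclideanreal (\<lambda>p. snd p i)"
proof -
  have "continuous_map (SX n) euclideanreal (\<lambda>x. x i)"
    by (intro continuous_map_from_subtopology continuous_map_product_projection) simp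
  then have "continuous_map (prod_topology Ist (SX n)) euclideanreal ((\<lambda>x. x i) \<circ> snd)"
    by (intro continuous_map_compose[OF continuous_map_snd])
  then show ?thesis by (simp add: o_def)
qed

lemma cont_tau: "continuous_map (prod_topology Ist (SX n)) euclideanreal fst"
proof -
  have "continuous_map (prod_topology Ist (SX n)) Ist fst" by (rule continuous_map_fst)
  then show ?thesis by (simp add: continuous_map_in_subtopology)
qed


definition wA :: "nat \<Rightarrow> (nat \<Rightarrow> nat) \<Rightarrow> (nat \<Rightarrow> real) \<Rightarrow> real" where
  "wA n s u = sum u {i. i \<le> n \<and> s i = 0}"
definition extd :: "nat \<Rightarrow> (nat \<Rightarrow> nat) \<Rightarrow> nat \<Rightarrow> nat" where
  "extd n s = (\<lambda>i. if i = 0 then 0 else if i \<le> Suc n then s (i - 1) else if i = Suc (Suc n) then 1 else 0)"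
definition ww :: "real \<Rightarrow> nat \<Rightarrow> (nat \<Rightarrow> nat) \<Rightarrow> (nat \<Rightarrow> real) \<Rightarrow> nat \<Rightarrow> real" where
  "ww \<tau> n s u = (\<lambda>j. if j = 0 then \<tau> * wA n s u else if j \<le> Suc n then (1 - \<tau>) * u (j - 1)
      else if j = Suc (Suc n) then \<tau> * (1 - wA n s u) else 0)"
definition a01 :: "real \<Rightarrow> nat \<Rightarrow> real" where
  "a01 a = (\<lambda>j. if j = 0 then a else if j = 1 then 1 - a else 0)"
definition bigT :: "nat \<Rightarrow> nat \<Rightarrow> (nat \<Rightarrow> nat) \<Rightarrow> nat \<Rightarrow> nat" where
  "bigT m n \<theta> = (\<lambda>i. if i = 0 then 0 else if i \<le> Suc m then Suc (\<theta> (i - 1)) else Suc (Suc n))"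
definition endsT :: "nat \<Rightarrow> nat \<Rightarrow> nat" where
  "endsT n = (\<lambda>i. if i = 0 then 0 else Suc (Suc n))"

lemma wA_bounds:
  assumes u: "u \<in> std_simplex n"
  shows "0 \<le> wA n s u" "wA n s u \<le> 1"
proof -
  show "0 \<le> wA n s u" unfolding wA_def using std_simplexD(1)[OF u] by (simp add: sum_nonneg)
  have "wA n s u \<le> sum u {..n}" unfolding wA_def
    by (rule sum_mono2) (auto simp: std_simplexD(1)[OF u])
  then show "wA n s u \<le> 1" using std_simplexD(3)[OF u] by simp
qed

lemma sum_atMost_filter: "sum f {..N} = sum f {i. i \<le> (N::nat) \<and> True}"
  by (simp add: atMost_def)

lemma ww_simplex:
  assumes t: "\<tau> \<in> {0..1}" and u: "u \<in> std_simplex n"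
  shows "ww \<tau> n s u \<in> std_simplex (Suc (Suc n))"
proof (rule std_simplexI)
  fix j show "0 \<le> ww \<tau> n s u j"
    using t wA_bounds[OF u, of s] std_simplexD(1)[OF u] by (auto simp: ww_def)
next
  fix j assume "j > Suc (Suc n)" then show "ww \<tau> n s u j = 0" by (simp add: ww_def)
next
  have "sum (ww \<tau> n s u) {..Suc (Suc n)} = \<tau> * wA n s u + sum (\<lambda>i. (1 - \<tau>) * u i) {i. i \<le> n \<and> True}
      + \<tau> * (1 - wA n s u)"
    unfolding sum_atMost_filter split3 by (simp add: ww_def)
  also have "sum (\<lambda>i. (1 - \<tau>) * u i) {i. i \<le> n \<and> True} = (1 - \<tau>)"
    using std_simplexD(3)[OF u] by (simp add: sum_distrib_left[symmetric] atMost_def)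
  finally show "sum (ww \<tau> n s u) {..Suc (Suc n)} = 1" by (simp add: algebra_simps)
qed

lemma a01_simplex: "0 \<le> a \<Longrightarrow> a \<le> 1 \<Longrightarrow> a01 a \<in> std_simplex 1"
  by (rule std_simplexI) (auto simp: a01_def)

lemma extd_J: "s \<in> simp J_sset n \<Longrightarrow> extd n s \<in> simp J_sset (Suc (Suc n))"
  unfolding simp_J extd_def by auto

lemma extd_D: assumes "s \<in> simp Delta1_sset n" shows "extd n s \<in> simp Delta1_sset (Suc (Suc n))"
  using assms unfolding simp_D dmor_def extd_def
  by (auto simp: not_le)

lemma bigT_dmor: assumes th: "dmor m n \<theta>" shows "dmor (Suc (Suc m)) (Suc (Suc n)) (bigT m n \<theta>)"
proof -
  have le0: "\<And>i. i \<le> m \<Longrightarrow> \<theta> i \<le> n" and mono0: "\<And>i j. i \<le> j \<Longrightarrow> j \<le> m \<Longrightarrow> \<theta> i \<le> \<theta> j"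
    using th unfolding dmor_def by auto
  have b1: "bigT m n \<theta> i \<le> Suc (Suc n)" if "i \<le> Suc (Suc m)" for i
  proof (cases "i = 0")
    case False
    show ?thesis
    proof (cases "i \<le> Suc m")
      case True
      then have "i - 1 \<le> m" by simp
      then have "\<theta> (i - 1) \<le> n" by (rule le0)
      then show ?thesis using True False by (simp add: bigT_def)
    qed (simp add: bigT_def)
  qed (simp add: bigT_def)
  have b2: "bigT m n \<theta> i \<le> bigT m n \<theta> j" if ij: "i \<le> j" "j \<le> Suc (Suc m)" for i j
  proof (cases "i = 0")
    case False
    then have j0: "j \<noteq> 0" using ij by simp
    show ?thesis
    proof (cases "j \<le> Suc m")
      case True
      then have "i - 1 \<le> j - 1" "j - 1 \<le> m" using ij by simp_all
      then have "\<theta> (i - 1) \<le> \<theta> (j - 1)" by (rule mono0)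
      then show ?thesis using True False j0 ij by (simp add: bigT_def)
    next
      case False
      then have "bigT m n \<theta> j = Suc (Suc n)" using j0 by (simp add: bigT_def)
      then show ?thesis using b1[of i] ij by simp
    qed
  qed (simp add: bigT_def)
  show ?thesis unfolding dmor_def using b1 b2 by blast
qed

lemma bigT_jact: assumes th: "dmor m n \<theta>"
  shows "jact (Suc (Suc m)) (bigT m n \<theta>) (extd n s) = extd m (jact m \<theta> s)"
proof
  fix i
  show "jact (Suc (Suc m)) (bigT m n \<theta>) (extd n s) i = extd m (jact m \<theta> s) i"
    using th unfolding jact_def bigT_def extd_def dmor_def
    by (cases "i = 0"; cases "i \<le> Suc m"; cases "i = Suc (Suc m)") auto
qed

lemma wA_nat: assumes th: "dmor m n \<theta>"
  shows "wA m (jact m \<theta> s) t = wA n s (simplex_push m \<theta> t)"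
proof -
  have "wA n s (simplex_push m \<theta> t) = sum t {i. i \<le> m \<and> s (\<theta> i) = 0}"
    unfolding wA_def by (rule push_sum[OF th])
  moreover have "{i. i \<le> m \<and> jact m \<theta> s i = 0} = {i. i \<le> m \<and> s (\<theta> i) = 0}"
    by (auto simp: jact_def)
  ultimately show ?thesis unfolding wA_def by simp
qed

lemma bigT_push: assumes th: "dmor m n \<theta>"
  shows "simplex_push (Suc (Suc m)) (bigT m n \<theta>) (ww \<tau> m (jact m \<theta> s) t) = ww \<tau> n s (simplex_push m \<theta> t)"
proof
  fix j
  let ?W = "ww \<tau> m (jact m \<theta> s) t" and ?A = "wA n s (simplex_push m \<theta> t)"
  have A: "wA m (jact m \<theta> s) t = ?A" by (rule wA_nat[OF th])
  have th_le: "i \<le> m \<Longrightarrow> \<theta> i \<le> n" for i using th unfolding dmor_def by auto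
  have mid: "sum (\<lambda>i. ?W (Suc i)) {i. i \<le> m \<and> bigT m n \<theta> (Suc i) = j}
      = (1 - \<tau>) * sum t {i. i \<le> m \<and> Suc (\<theta> i) = j}"
  proof -
    have "{i. i \<le> m \<and> bigT m n \<theta> (Suc i) = j} = {i. i \<le> m \<and> Suc (\<theta> i) = j}"
      by (auto simp: bigT_def)
    moreover have "sum (\<lambda>i. ?W (Suc i)) {i. i \<le> m \<and> Suc (\<theta> i) = j} = sum (\<lambda>i. (1 - \<tau>) * t i) {i. i \<le> m \<and> Suc (\<theta> i) = j}"
      by (rule sum.cong) (auto simp: ww_def)
    ultimately show ?thesis by (simp add: sum_distrib_left)
  qed
  have "simplex_push (Suc (Suc m)) (bigT m n \<theta>) ?W j =
     (if bigT m n \<theta> 0 = j then ?W 0 else 0) + sum (\<lambda>i. ?W (Suc i)) {i. i \<le> m \<and> bigT m n \<theta> (Suc i) = j}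
     + (if bigT m n \<theta> (Suc (Suc m)) = j then ?W (Suc (Suc m)) else 0)"
    unfolding simplex_push_def by (rule split3)
  also have "\<dots> = (if 0 = j then \<tau> * ?A else 0) + (1 - \<tau>) * sum t {i. i \<le> m \<and> Suc (\<theta> i) = j}
     + (if Suc (Suc n) = j then \<tau> * (1 - ?A) else 0)"
    unfolding mid A[symmetric] by (simp add: bigT_def ww_def)
  also have "\<dots> = ww \<tau> n s (simplex_push m \<theta> t) j"
  proof (cases "j = 0")
    case True then show ?thesis by (simp add: ww_def)
  next
    case False
    then obtain k where k: "j = Suc k" by (cases j) auto
    show ?thesis
    proof (cases "k \<le> n")
      case True
      then have e: "{i. i \<le> m \<and> Suc (\<theta> i) = j} = {i. i \<le> m \<and> \<theta> i = k}" using k by auto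
      show ?thesis unfolding e using True k by (simp add: ww_def simplex_push_def)
    next
      case False
      then have e: "{i. i \<le> m \<and> Suc (\<theta> i) = j} = {}" using k th_le by fastforce
      have z: "sum t {i. i \<le> m \<and> Suc (\<theta> i) = j} = 0" unfolding e by simp
      show ?thesis unfolding z using False k by (simp add: ww_def)
    qed
  qed
  finally show "simplex_push (Suc (Suc m)) (bigT m n \<theta>) ?W j = ww \<tau> n s (simplex_push m \<theta> t) j" .
qed

lemma Suc_dmor: "dmor n (Suc (Suc n)) Suc" by (auto simp: dmor_def)

lemma Suc_jact: "s \<in> simp J_sset n \<Longrightarrow> jact n Suc (extd n s) = s"
  unfolding simp_J jact_def extd_def by fastforce

lemma Suc_push: "simplex_push n Suc u = ww 0 n s u"
proof
  fix j
  show "simplex_push n Suc u j = ww 0 n s u j"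
  proof (cases j)
    case 0 then show ?thesis by (simp add: simplex_push_def ww_def)
  next
    case (Suc k)
    show ?thesis
    proof (cases "k \<le> n")
      case True
      then have e: "{i. i \<le> n \<and> Suc i = j} = {k}" using Suc by auto
      show ?thesis unfolding simplex_push_def e using True Suc by (simp add: ww_def)
    next
      case False
      then have e: "{i. i \<le> n \<and> Suc i = j} = {}" using Suc by auto
      show ?thesis unfolding simplex_push_def e using False Suc by (simp add: ww_def)
    qed
  qed
qed

lemma endsT_dmor: "dmor 1 (Suc (Suc n)) (endsT n)" by (auto simp: dmor_def endsT_def)

lemma endsT_jact: "jact 1 (endsT n) (extd n s) = sq1 0 1"
  by (auto simp: jact_def endsT_def extd_def sq1_def)

lemma endsT_push: "simplex_push 1 (endsT n) (a01 (wA n s u)) = ww 1 n s u"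
proof
  fix j
  have e: "{i. i \<le> 1 \<and> endsT n i = j} = (if j = 0 then {0} else if j = Suc (Suc n) then {1} else {})"
    by (auto simp: endsT_def)
  show "simplex_push 1 (endsT n) (a01 (wA n s u)) j = ww 1 n s u j"
    unfolding simplex_push_def e by (simp add: a01_def ww_def)
qed

lemma D_push: assumes s: "s \<in> simp Delta1_sset n" and u: "u \<in> std_simplex n"
  shows "simplex_push n s u = a01 (wA n s u)"
proof -
  have sd: "dmor n 1 s" using s by (simp add: simp_D)
  show ?thesis
  proof (rule simplex1_eq)
    show "simplex_push n s u \<in> std_simplex 1" by (rule push_simplex[OF sd u])
    show "a01 (wA n s u) \<in> std_simplex 1" using wA_bounds[OF u] by (intro a01_simplex)
    show "simplex_push n s u 0 = a01 (wA n s u) 0"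
      by (simp add: simplex_push_def a01_def wA_def)
  qed
qed

lemma extd_push: assumes s: "s \<in> simp Delta1_sset n" and u: "u \<in> std_simplex n" and t: "\<tau> \<in> {0..1}"
  shows "simplex_push (Suc (Suc n)) (extd n s) (ww \<tau> n s u) = a01 (wA n s u)"
proof (rule simplex1_eq)
  have ed: "dmor (Suc (Suc n)) 1 (extd n s)" using extd_D[OF s] by (simp add: simp_D)
  show "simplex_push (Suc (Suc n)) (extd n s) (ww \<tau> n s u) \<in> std_simplex 1"
    by (rule push_simplex[OF ed ww_simplex[OF t u]])
  show "a01 (wA n s u) \<in> std_simplex 1" using wA_bounds[OF u] by (intro a01_simplex)
  have "sum (\<lambda>i. ww \<tau> n s u (Suc i)) {i. i \<le> n \<and> extd n s (Suc i) = 0} = sum (\<lambda>i. (1 - \<tau>) * u i) {i. i \<le> n \<and> s i = 0}"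
  proof -
    have "{i. i \<le> n \<and> extd n s (Suc i) = 0} = {i. i \<le> n \<and> s i = 0}" by (auto simp: extd_def)
    then show ?thesis by (auto intro!: sum.cong simp: ww_def)
  qed
  then have "simplex_push (Suc (Suc n)) (extd n s) (ww \<tau> n s u) 0 = \<tau> * wA n s u + (1 - \<tau>) * wA n s u"
    unfolding simplex_push_def split3 by (simp add: ww_def extd_def wA_def sum_distrib_left)
  then show "simplex_push (Suc (Suc n)) (extd n s) (ww \<tau> n s u) 0 = a01 (wA n s u) 0"
    by (simp add: a01_def algebra_simps)
qed


definition Phi :: "'a sset \<Rightarrow> real \<Rightarrow> nat \<Rightarrow> 'a + 'a \<times> (nat \<Rightarrow> nat) \<Rightarrow> (nat \<Rightarrow> real)
    \<Rightarrow> (nat \<times> ('a + 'a \<times> (nat \<Rightarrow> nat)) set \<times> (nat \<Rightarrow> real)) set" where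
  "Phi X \<tau> n z u = (case z of Inl x \<Rightarrow> rq (tildeX X) (n, tc X n (Inl x), u)
     | Inr p \<Rightarrow> rq (tildeX X) (Suc (Suc n), tc X (Suc (Suc n)) (Inr (fst p, extd n (snd p))), ww \<tau> n (snd p) u))"

definition Psi :: "'a sset \<Rightarrow> nat \<Rightarrow> 'a + 'a \<times> (nat \<Rightarrow> nat) \<Rightarrow> (nat \<Rightarrow> real) \<Rightarrow> (nat \<times> 'a \<times> (nat \<Rightarrow> real)) set" where
  "Psi X n z u = (case z of Inl x \<Rightarrow> rq X (n, x, u) | Inr p \<Rightarrow> rq X (1, fst p, a01 (wA n (snd p) u)))"

lemma Phi_Inl: "Phi X \<tau> n (Inl x) u = rq (tildeX X) (n, tc X n (Inl x), u)" by (simp add: Phi_def)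
lemma Phi_Inr: "Phi X \<tau> n (Inr (\<sigma>, s)) u = rq (tildeX X) (Suc (Suc n), tc X (Suc (Suc n)) (Inr (\<sigma>, extd n s)), ww \<tau> n s u)"
  by (simp add: Phi_def)
lemma Psi_Inl: "Psi X n (Inl x) u = rq X (n, x, u)" by (simp add: Psi_def)
lemma Psi_Inr: "Psi X n (Inr (\<sigma>, s)) u = rq X (1, \<sigma>, a01 (wA n s u))" by (simp add: Psi_def)

lemma tc_Inl_act:
  assumes X: "is_sset X" and th: "dmor m n \<theta>" and x: "x \<in> simp X n"
  shows "tc X m (Inl (act X m n \<theta> x)) = act (tildeX X) m n \<theta> (tc X n (Inl x))"
  using act_tc[OF X th InlI[OF x]] by (simp add: sum_act_Inl)

lemma tc_Inr_act:
  assumes X: "is_sset X" and th: "dmor m n \<theta>" and z: "Inr (\<sigma>, s) \<in> TS X n"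
  shows "act (tildeX X) m n \<theta> (tc X n (Inr (\<sigma>, s))) = tc X m (Inr (\<sigma>, jact m \<theta> s))"
  using act_tc[OF X th z] by (simp add: sum_act_Inr)

lemma tc_edge01:
  assumes X: "is_sset X" and x: "x \<in> simp X 1"
  shows "tc X 1 (Inr (x, sq1 0 1)) = tc X 1 (Inl x)"
proof -
  have d: "sq1 0 1 \<in> simp Delta1_sset 1" by (auto simp: simp_D dmor_def sq1_def)
  have "act X 1 1 (sq1 0 1) x = act X 1 1 id x"
    by (rule sset_axioms(4)[OF X]) (auto simp: sq1_def)
  also have "\<dots> = x" using sset_axioms(2)[OF X x] .
  finally show ?thesis using glue[OF X x d] by simp
qed

lemma Phi_glue:
  assumes X: "is_sset X" and \<sigma>: "\<sigma> \<in> simp X 1" and s: "s \<in> simp Delta1_sset n"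
    and t: "\<tau> \<in> {0..1}" and u: "u \<in> std_simplex n"
  shows "Phi X \<tau> n (Inl (act X n 1 s \<sigma>)) u = Phi X \<tau> n (Inr (\<sigma>, s)) u"
proof -
  let ?Y = "tildeX X" and ?c1 = "tc X 1 (Inl \<sigma>)"
  have c1: "?c1 \<in> simp ?Y 1" by (rule tc_in[OF InlI[OF \<sigma>]])
  have sd: "dmor n 1 s" using s by (simp add: simp_D)
  have a: "tc X n (Inl (act X n 1 s \<sigma>)) = act ?Y n 1 s ?c1" by (rule tc_Inl_act[OF X sd \<sigma>])
  have an: "act ?Y n 1 s ?c1 \<in> simp ?Y n" unfolding a[symmetric]
    by (rule tc_in[OF InlI[OF sset_axioms(1)[OF X sd \<sigma>]]])
  have "Phi X \<tau> n (Inl (act X n 1 s \<sigma>)) u = rq ?Y (n, act ?Y n 1 s ?c1, u)" unfolding Phi_Inl a ..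
  also have "\<dots> = rq ?Y (1, ?c1, simplex_push n s u)" by (rule rq_gen[OF sd c1 an u])
  also have "\<dots> = rq ?Y (1, ?c1, a01 (wA n s u))" unfolding D_push[OF s u] ..
  finally have L: "Phi X \<tau> n (Inl (act X n 1 s \<sigma>)) u = rq ?Y (1, ?c1, a01 (wA n s u))" .
  let ?e = "extd n s"
  have eD: "?e \<in> simp Delta1_sset (Suc (Suc n))" by (rule extd_D[OF s])
  have ed: "dmor (Suc (Suc n)) 1 ?e" using eD by (simp add: simp_D)
  have b: "tc X (Suc (Suc n)) (Inr (\<sigma>, ?e)) = act ?Y (Suc (Suc n)) 1 ?e ?c1"
    unfolding glue[OF X \<sigma> eD] by (rule tc_Inl_act[OF X ed \<sigma>])
  have bn: "act ?Y (Suc (Suc n)) 1 ?e ?c1 \<in> simp ?Y (Suc (Suc n))" unfolding b[symmetric]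
    by (rule tc_in[OF inr_TS[OF \<sigma> D_sub_J[OF eD]]])
  have "Phi X \<tau> n (Inr (\<sigma>, s)) u = rq ?Y (Suc (Suc n), act ?Y (Suc (Suc n)) 1 ?e ?c1, ww \<tau> n s u)"
    unfolding Phi_Inr b ..
  also have "\<dots> = rq ?Y (1, ?c1, simplex_push (Suc (Suc n)) ?e (ww \<tau> n s u))"
    by (rule rq_gen[OF ed c1 bn ww_simplex[OF t u]])
  also have "\<dots> = rq ?Y (1, ?c1, a01 (wA n s u))" unfolding extd_push[OF s u t] ..
  finally show ?thesis using L by simp
qed

lemma Phi_TR:
  assumes X: "is_sset X" and r: "(z, z') \<in> TR X n" and t: "\<tau> \<in> {0..1}" and u: "u \<in> std_simplex n"
  shows "Phi X \<tau> n z u = Phi X \<tau> n z' u"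
proof -
  have r1: "(z, z') \<in> (TG X n \<union> (TG X n)\<inverse>)\<^sup>*" using r unfolding TR_alt equiv_closure_on_def by auto
  show ?thesis
  proof (rule resp_star[OF _ r1])
    fix p q assume "(p, q) \<in> TG X n"
    then obtain \<sigma> s where "p = Inl (act X n 1 s \<sigma>)" "q = Inr (\<sigma>, s)" "\<sigma> \<in> simp X 1" "s \<in> simp Delta1_sset n"
      unfolding TG_def by blast
    then show "Phi X \<tau> n p u = Phi X \<tau> n q u" using Phi_glue[OF X _ _ t u] by simp
  qed
qed

lemma Psi_glue:
  assumes X: "is_sset X" and \<sigma>: "\<sigma> \<in> simp X 1" and s: "s \<in> simp Delta1_sset n" and u: "u \<in> std_simplex n"
  shows "Psi X n (Inl (act X n 1 s \<sigma>)) u = Psi X n (Inr (\<sigma>, s)) u"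
proof -
  have sd: "dmor n 1 s" using s by (simp add: simp_D)
  have "Psi X n (Inl (act X n 1 s \<sigma>)) u = rq X (1, \<sigma>, simplex_push n s u)"
    unfolding Psi_Inl by (rule rq_gen[OF sd \<sigma> sset_axioms(1)[OF X sd \<sigma>] u])
  then show ?thesis unfolding Psi_Inr D_push[OF s u] .
qed

lemma Psi_TR:
  assumes X: "is_sset X" and r: "(z, z') \<in> TR X n" and u: "u \<in> std_simplex n"
  shows "Psi X n z u = Psi X n z' u"
proof -
  have r1: "(z, z') \<in> (TG X n \<union> (TG X n)\<inverse>)\<^sup>*" using r unfolding TR_alt equiv_closure_on_def by auto
  show ?thesis
  proof (rule resp_star[OF _ r1])
    fix p q assume "(p, q) \<in> TG X n"
    then obtain \<sigma> s where "p = Inl (act X n 1 s \<sigma>)" "q = Inr (\<sigma>, s)" "\<sigma> \<in> simp X 1" "s \<in> simp Delta1_sset n"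
      unfolding TG_def by blast
    then show "Psi X n p u = Psi X n q u" using Psi_glue[OF X _ _ u] by simp
  qed
qed

lemma Phi_nat:
  assumes X: "is_sset X" and th: "dmor m n \<theta>" and z: "z \<in> TS X n" and t: "t \<in> std_simplex m"
    and tau: "\<tau> \<in> {0..1}"
  shows "Phi X \<tau> m (sum_act X (BB X) m n \<theta> z) t = Phi X \<tau> n z (simplex_push m \<theta> t)"
proof (cases z)
  case (Inl x)
  then have x: "x \<in> simp X n" using z by simp
  let ?Y = "tildeX X"
  have a: "tc X m (Inl (act X m n \<theta> x)) = act ?Y m n \<theta> (tc X n (Inl x))" by (rule tc_Inl_act[OF X th x])
  have an: "act ?Y m n \<theta> (tc X n (Inl x)) \<in> simp ?Y m" unfolding a[symmetric]
    by (rule tc_in[OF InlI[OF sset_axioms(1)[OF X th x]]])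
  show ?thesis unfolding Inl sum_act_Inl Phi_Inl a
    by (rule rq_gen[OF th tc_in[OF InlI[OF x]] an t])
next
  case (Inr p)
  obtain \<sigma> s where p: "p = (\<sigma>, s)" by (cases p)
  then have \<sigma>: "\<sigma> \<in> simp X 1" and s: "s \<in> simp J_sset n" using z Inr by (simp_all add: simp_copr)
  let ?Y = "tildeX X" and ?C = "tc X (Suc (Suc n)) (Inr (\<sigma>, extd n s))"
  have Cz: "Inr (\<sigma>, extd n s) \<in> TS X (Suc (Suc n))" by (rule inr_TS[OF \<sigma> extd_J[OF s]])
  have Td: "dmor (Suc (Suc m)) (Suc (Suc n)) (bigT m n \<theta>)" by (rule bigT_dmor[OF th])
  have a: "act ?Y (Suc (Suc m)) (Suc (Suc n)) (bigT m n \<theta>) ?C = tc X (Suc (Suc m)) (Inr (\<sigma>, extd m (jact m \<theta> s)))"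
    unfolding tc_Inr_act[OF X Td Cz] bigT_jact[OF th] ..
  have an: "act ?Y (Suc (Suc m)) (Suc (Suc n)) (bigT m n \<theta>) ?C \<in> simp ?Y (Suc (Suc m))" unfolding a
    by (rule tc_in[OF inr_TS[OF \<sigma> extd_J[OF jact_J[OF th s]]]])
  have "Phi X \<tau> m (sum_act X (BB X) m n \<theta> z) t = rq ?Y (Suc (Suc m), act ?Y (Suc (Suc m)) (Suc (Suc n)) (bigT m n \<theta>) ?C, ww \<tau> m (jact m \<theta> s) t)"
    unfolding Inr p sum_act_Inr Phi_Inr a ..
  also have "\<dots> = rq ?Y (Suc (Suc n), ?C, simplex_push (Suc (Suc m)) (bigT m n \<theta>) (ww \<tau> m (jact m \<theta> s) t))"
    by (rule rq_gen[OF Td tc_in[OF Cz] an ww_simplex[OF tau t]])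
  also have "\<dots> = Phi X \<tau> n z (simplex_push m \<theta> t)"
    unfolding bigT_push[OF th] Inr p Phi_Inr ..
  finally show ?thesis .
qed

lemma Psi_nat:
  assumes X: "is_sset X" and th: "dmor m n \<theta>" and z: "z \<in> TS X n" and t: "t \<in> std_simplex m"
  shows "Psi X m (sum_act X (BB X) m n \<theta> z) t = Psi X n z (simplex_push m \<theta> t)"
proof (cases z)
  case (Inl x)
  then have x: "x \<in> simp X n" using z by simp
  show ?thesis unfolding Inl sum_act_Inl Psi_Inl
    by (rule rq_gen[OF th x sset_axioms(1)[OF X th x] t])
next
  case (Inr p)
  obtain \<sigma> s where p: "p = (\<sigma>, s)" by (cases p)
  show ?thesis unfolding Inr p sum_act_Inr Psi_Inr wA_nat[OF th] ..
qed


definition GH :: "'a sset \<Rightarrow> real \<Rightarrow> nat \<times> ('a + 'a \<times> (nat \<Rightarrow> nat)) set \<times> (nat \<Rightarrow> real)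
    \<Rightarrow> (nat \<times> ('a + 'a \<times> (nat \<Rightarrow> nat)) set \<times> (nat \<Rightarrow> real)) set" where
  "GH X \<tau> p = (case p of (n, c, u) \<Rightarrow> Phi X \<tau> n (SOME z. z \<in> c) u)"
definition Gg :: "'a sset \<Rightarrow> real \<Rightarrow> nat \<times> ('a + 'a \<times> (nat \<Rightarrow> nat)) set \<times> (nat \<Rightarrow> real)
    \<Rightarrow> (nat \<times> 'a \<times> (nat \<Rightarrow> real)) set" where
  "Gg X \<tau> p = (case p of (n, c, u) \<Rightarrow> Psi X n (SOME z. z \<in> c) u)"
definition Gf :: "'a sset \<Rightarrow> real \<Rightarrow> nat \<times> 'a \<times> (nat \<Rightarrow> real)
    \<Rightarrow> (nat \<times> ('a + 'a \<times> (nat \<Rightarrow> nat)) set \<times> (nat \<Rightarrow> real)) set" where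
  "Gf X \<tau> p = (case p of (n, x, t) \<Rightarrow> rq (tildeX X) (n, tilde_incl X n x, t))"

lemma cls_tc:
  assumes "c \<in> simp (tildeX X) n"
  obtains z where "z \<in> TS X n" "c = tc X n z"
proof -
  from assms[unfolded simp_tilde] obtain z where "c = TR X n `` {z}" "z \<in> TS X n" by (rule quotientE)
  then show ?thesis using that by (simp add: tc_def)
qed

lemma some_tc: assumes "z \<in> TS X n" shows "(z, SOME z'. z' \<in> tc X n z) \<in> TR X n"
proof -
  have "(SOME z'. z' \<in> tc X n z) \<in> tc X n z" using tc_self[OF assms] by (rule someI)
  then show ?thesis by (simp add: tc_def)
qed

lemma GH_tc:
  assumes X: "is_sset X" and z: "z \<in> TS X n" and t: "\<tau> \<in> {0..1}" and u: "u \<in> std_simplex n"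
  shows "GH X \<tau> (n, tc X n z, u) = Phi X \<tau> n z u"
  unfolding GH_def using Phi_TR[OF X some_tc[OF z] t u] by simp

lemma Gg_tc:
  assumes X: "is_sset X" and z: "z \<in> TS X n" and u: "u \<in> std_simplex n"
  shows "Gg X \<tau> (n, tc X n z, u) = Psi X n z u"
  unfolding Gg_def using Psi_TR[OF X some_tc[OF z] u] by simp

lemma GH_resp:
  assumes X: "is_sset X" and t: "\<tau> \<in> {0..1}" and th: "dmor m n \<theta>" and c: "c \<in> simp (tildeX X) n"
    and u: "u \<in> std_simplex m"
  shows "GH X \<tau> (m, act (tildeX X) m n \<theta> c, u) = GH X \<tau> (n, c, simplex_push m \<theta> u)"
proof -
  obtain z where z: "z \<in> TS X n" "c = tc X n z" using c by (rule cls_tc)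
  have "act (tildeX X) m n \<theta> c = tc X m (sum_act X (BB X) m n \<theta> z)" using act_tc[OF X th z(1)] z(2) by simp
  then show ?thesis
    using GH_tc[OF X sum_act_TS[OF X th z(1)] t u] GH_tc[OF X z(1) t push_simplex[OF th u]]
      Phi_nat[OF X th z(1) u t] z(2) by simp
qed

lemma Gg_resp:
  assumes X: "is_sset X" and th: "dmor m n \<theta>" and c: "c \<in> simp (tildeX X) n"
    and u: "u \<in> std_simplex m"
  shows "Gg X \<tau> (m, act (tildeX X) m n \<theta> c, u) = Gg X \<tau> (n, c, simplex_push m \<theta> u)"
proof -
  obtain z where z: "z \<in> TS X n" "c = tc X n z" using c by (rule cls_tc)
  have "act (tildeX X) m n \<theta> c = tc X m (sum_act X (BB X) m n \<theta> z)" using act_tc[OF X th z(1)] z(2) by simp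
  then show ?thesis
    using Gg_tc[OF X sum_act_TS[OF X th z(1)] u] Gg_tc[OF X z(1) push_simplex[OF th u]]
      Psi_nat[OF X th z(1) u] z(2) by simp
qed

lemma Gf_resp:
  assumes X: "is_sset X" and th: "dmor m n \<theta>" and x: "x \<in> simp X n" and u: "u \<in> std_simplex m"
  shows "Gf X \<tau> (m, act X m n \<theta> x, u) = Gf X \<tau> (n, x, simplex_push m \<theta> u)"
proof -
  have sm: "sset_map X (tildeX X) (tilde_incl X)" by (rule incl_map[OF X])
  have a: "tilde_incl X m (act X m n \<theta> x) = act (tildeX X) m n \<theta> (tilde_incl X n x)"
    using sm th x unfolding sset_map_def by blast
  have i1: "tilde_incl X n x \<in> simp (tildeX X) n" using sm x unfolding sset_map_def by blast
  have i2: "act (tildeX X) m n \<theta> (tilde_incl X n x) \<in> simp (tildeX X) m"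
    unfolding a[symmetric] using sm sset_axioms(1)[OF X th x] unfolding sset_map_def by blast
  show ?thesis unfolding Gf_def using rq_gen[OF th i1 i2 u] a by simp
qed

lemma cont_wA: "continuous_map (prod_topology Ist (SX n)) euclideanreal (\<lambda>p. wA n s (snd p))"
  unfolding wA_def by (intro continuous_map_sum cont_proj) auto

lemma cont_ww: "continuous_map (prod_topology Ist (SX n)) euclideanreal (\<lambda>p. ww (fst p) n s (snd p) k)"
proof -
  consider "k = 0" | "k \<noteq> 0" "k \<le> Suc n" | "k = Suc (Suc n)" | "k \<noteq> 0" "\<not> k \<le> Suc n" "k \<noteq> Suc (Suc n)" by blast
  then show ?thesis
  proof cases
    case 1
    then have eq: "(\<lambda>p. ww (fst p) n s (snd p) k) = (\<lambda>p. fst p * wA n s (snd p))" by (simp add: ww_def)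
    show ?thesis unfolding eq by (intro continuous_map_real_mult cont_tau cont_wA)
  next
    case 2
    then have eq: "(\<lambda>p. ww (fst p) n s (snd p) k) = (\<lambda>p. (1 - fst p) * snd p (k - 1))" by (simp add: ww_def)
    show ?thesis unfolding eq by (intro continuous_map_real_mult continuous_map_diff cont_tau cont_proj) simp
  next
    case 3
    then have eq: "(\<lambda>p. ww (fst p) n s (snd p) k) = (\<lambda>p. fst p * (1 - wA n s (snd p)))" by (simp add: ww_def)
    show ?thesis unfolding eq by (intro continuous_map_real_mult continuous_map_diff cont_tau cont_wA) simp
  next
    case 4
    then have eq: "(\<lambda>p. ww (fst p) n s (snd p) k) = (\<lambda>p. 0)" by (simp add: ww_def)
    show ?thesis unfolding eq by simp
  qed
qed

lemma cont_a01: "continuous_map (prod_topology Ist (SX n)) euclideanreal (\<lambda>p. a01 (wA n s (snd p)) k)"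
proof -
  consider "k = 0" | "k = 1" | "k \<noteq> 0" "k \<noteq> 1" by blast
  then show ?thesis
  proof cases
    case 1
    then have eq: "(\<lambda>p. a01 (wA n s (snd p)) k) = (\<lambda>p. wA n s (snd p))" by (simp add: a01_def)
    show ?thesis unfolding eq by (intro cont_wA)
  next
    case 2
    then have eq: "(\<lambda>p. a01 (wA n s (snd p)) k) = (\<lambda>p. 1 - wA n s (snd p))" by (simp add: a01_def)
    show ?thesis unfolding eq by (intro continuous_map_diff cont_wA) simp
  next
    case 3
    then have eq: "(\<lambda>p. a01 (wA n s (snd p)) k) = (\<lambda>p. 0)" by (simp add: a01_def)
    show ?thesis unfolding eq by simp
  qed
qed

lemma cont_snd_SX: "continuous_map (prod_topology Ist (SX n)) (SX n) snd"
  by (rule continuous_map_snd)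

lemma topspace_IS: "p \<in> topspace (prod_topology Ist (SX n)) \<longleftrightarrow> fst p \<in> {0..1} \<and> snd p \<in> std_simplex n"
  by (cases p) simp

lemma Phi_cont:
  assumes X: "is_sset X" and z: "z \<in> TS X n"
  shows "continuous_map (prod_topology Ist (SX n)) (realization (tildeX X)) (\<lambda>p. Phi X (fst p) n z (snd p))"
proof (cases z)
  case (Inl x)
  have c: "tc X n (Inl x) \<in> simp (tildeX X) n" using z Inl by (intro tc_in) simp
  show ?thesis unfolding Inl Phi_Inl by (rule comp_cont[OF c cont_snd_SX])
next
  case (Inr p)
  obtain \<sigma> s where p: "p = (\<sigma>, s)" by (cases p)
  then have \<sigma>: "\<sigma> \<in> simp X 1" and s: "s \<in> simp J_sset n" using z Inr by (simp_all add: simp_copr)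
  have c: "tc X (Suc (Suc n)) (Inr (\<sigma>, extd n s)) \<in> simp (tildeX X) (Suc (Suc n))"
    by (rule tc_in[OF inr_TS[OF \<sigma> extd_J[OF s]]])
  have F: "continuous_map (prod_topology Ist (SX n)) (SX (Suc (Suc n))) (\<lambda>p. ww (fst p) n s (snd p))"
    by (rule cont_SX[OF cont_ww]) (auto simp: topspace_IS intro: ww_simplex)
  show ?thesis unfolding Inr p Phi_Inr by (rule comp_cont[OF c F])
qed

lemma Psi_cont:
  assumes X: "is_sset X" and z: "z \<in> TS X n"
  shows "continuous_map (prod_topology Ist (SX n)) (realization X) (\<lambda>p. Psi X n z (snd p))"
proof (cases z)
  case (Inl x)
  have c: "x \<in> simp X n" using z Inl by simp
  show ?thesis unfolding Inl Psi_Inl by (rule comp_cont[OF c cont_snd_SX])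
next
  case (Inr p)
  obtain \<sigma> s where p: "p = (\<sigma>, s)" by (cases p)
  then have \<sigma>: "\<sigma> \<in> simp X 1" using z Inr by (simp_all add: simp_copr)
  have F: "continuous_map (prod_topology Ist (SX n)) (SX 1) (\<lambda>p. a01 (wA n s (snd p)))"
  proof (rule cont_SX[OF cont_a01])
    fix p assume "p \<in> topspace (prod_topology Ist (SX n))"
    then have "snd p \<in> std_simplex n" by (cases p) auto
    then show "a01 (wA n s (snd p)) \<in> std_simplex 1" using a01_simplex wA_bounds by blast
  qed
  show ?thesis unfolding Inr p Psi_Inr by (rule comp_cont[OF \<sigma> F])
qed

lemma GH_slice:
  assumes X: "is_sset X" and c: "c \<in> simp (tildeX X) n"
  shows "continuous_map (prod_topology Ist (SX n)) (realization (tildeX X)) (\<lambda>(\<tau>, u). GH X \<tau> (n, c, u))"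
proof -
  obtain z where z: "z \<in> TS X n" "c = tc X n z" using c by (rule cls_tc)
  show ?thesis
  proof (rule continuous_map_eq[OF Phi_cont[OF X z(1)]])
    fix p assume "p \<in> topspace (prod_topology Ist (SX n))"
    then show "Phi X (fst p) n z (snd p) = (\<lambda>(\<tau>, u). GH X \<tau> (n, c, u)) p"
      using GH_tc[OF X z(1)] z(2) by (cases p) simp
  qed
qed

lemma Gg_slice:
  assumes X: "is_sset X" and c: "c \<in> simp (tildeX X) n"
  shows "continuous_map (prod_topology Ist (SX n)) (realization X) (\<lambda>(\<tau>, u). Gg X \<tau> (n, c, u))"
proof -
  obtain z where z: "z \<in> TS X n" "c = tc X n z" using c by (rule cls_tc)
  show ?thesis
  proof (rule continuous_map_eq[OF Psi_cont[OF X z(1)]])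
    fix p assume "p \<in> topspace (prod_topology Ist (SX n))"
    then show "Psi X n z (snd p) = (\<lambda>(\<tau>, u). Gg X \<tau> (n, c, u)) p"
      using Gg_tc[OF X z(1)] z(2) by (cases p) simp
  qed
qed

lemma Gf_slice:
  assumes X: "is_sset X" and x: "x \<in> simp X n"
  shows "continuous_map (prod_topology Ist (SX n)) (realization (tildeX X)) (\<lambda>(\<tau>, u). Gf X \<tau> (n, x, u))"
proof -
  have i1: "tilde_incl X n x \<in> simp (tildeX X) n" using incl_map[OF X] x unfolding sset_map_def by blast
  have "continuous_map (prod_topology Ist (SX n)) (realization (tildeX X)) (\<lambda>p. rq (tildeX X) (n, tilde_incl X n x, snd p))"
    by (rule comp_cont[OF i1 cont_snd_SX])
  then show ?thesis by (simp add: Gf_def case_prod_beta')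
qed


definition HH :: "'a sset \<Rightarrow> real \<times> (nat \<times> ('a + 'a \<times> (nat \<Rightarrow> nat)) set \<times> (nat \<Rightarrow> real)) set
    \<Rightarrow> (nat \<times> ('a + 'a \<times> (nat \<Rightarrow> nat)) set \<times> (nat \<Rightarrow> real)) set" where
  "HH X = (\<lambda>(\<tau>, cl). GH X \<tau> (SOME p. p \<in> cl))"
definition gg :: "'a sset \<Rightarrow> (nat \<times> ('a + 'a \<times> (nat \<Rightarrow> nat)) set \<times> (nat \<Rightarrow> real)) set
    \<Rightarrow> (nat \<times> 'a \<times> (nat \<Rightarrow> real)) set" where
  "gg X = (\<lambda>cl. Gg X 0 (SOME p. p \<in> cl))"

lemma ff_eq: "real_map X (tildeX X) (tilde_incl X) = (\<lambda>cl. Gf X 0 (SOME p. p \<in> cl))"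
  unfolding real_map_def Gf_def rq_def ..

lemma eval_G:
  assumes resp: "\<And>\<tau> m n \<theta> x t. \<tau> \<in> {0..1} \<Longrightarrow> dmor m n \<theta> \<Longrightarrow> x \<in> simp X n \<Longrightarrow> t \<in> std_simplex m \<Longrightarrow>
        G \<tau> (m, act X m n \<theta> x, t) = G \<tau> (n, x, simplex_push m \<theta> t)"
    and p: "p \<in> pre_points X" and t: "(\<tau>::real) \<in> {0..1}"
  shows "G \<tau> (SOME q. q \<in> rq X p) = G \<tau> p"
  using resp_real[OF resp[OF t] some_in_rq[OF p]] by simp

lemma top_elem:
  assumes "cl \<in> topspace (realization Y)"
  obtains n c u where "c \<in> simp Y n" "u \<in> std_simplex n" "cl = rq Y (n, c, u)"
proof -
  from assms[unfolded topspace_realization] obtain p where p: "cl = real_rel Y `` {p}" "p \<in> pre_points Y"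
    by (rule quotientE)
  obtain n c u where "p = (n, c, u)" by (cases p)
  then show ?thesis using that p unfolding pre_points_def rq_def by blast
qed

lemma HH_cont: assumes X: "is_sset X"
  shows "continuous_map (prod_topology Ist (realization (tildeX X))) (realization (tildeX X)) (HH X)"
  unfolding HH_def by (rule cont_real[OF GH_slice[OF X] GH_resp[OF X]])

lemma pair0_cont: "continuous_map Z (prod_topology Ist Z) (\<lambda>c. (0, c))"
  unfolding continuous_map_pairwise by (simp add: o_def)

lemma gg_cont: assumes X: "is_sset X"
  shows "continuous_map (realization (tildeX X)) (realization X) (gg X)"
proof -
  have "continuous_map (prod_topology Ist (realization (tildeX X))) (realization X) (\<lambda>(\<tau>, c). Gg X \<tau> (SOME p. p \<in> c))"
    by (rule cont_real[OF Gg_slice[OF X] Gg_resp[OF X]])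
  then have "continuous_map (realization (tildeX X)) (realization X) ((\<lambda>(\<tau>, c). Gg X \<tau> (SOME p. p \<in> c)) \<circ> (\<lambda>c. (0, c)))"
    by (rule continuous_map_compose[OF pair0_cont])
  then show ?thesis by (simp add: gg_def o_def)
qed

lemma ff_cont: assumes X: "is_sset X"
  shows "continuous_map (realization X) (realization (tildeX X)) (real_map X (tildeX X) (tilde_incl X))"
proof -
  have "continuous_map (prod_topology Ist (realization X)) (realization (tildeX X)) (\<lambda>(\<tau>, c). Gf X \<tau> (SOME p. p \<in> c))"
    by (rule cont_real[OF Gf_slice[OF X] Gf_resp[OF X]])
  then have "continuous_map (realization X) (realization (tildeX X)) ((\<lambda>(\<tau>, c). Gf X \<tau> (SOME p. p \<in> c)) \<circ> (\<lambda>c. (0, c)))"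
    by (rule continuous_map_compose[OF pair0_cont])
  then show ?thesis by (simp add: ff_eq o_def)
qed

lemma ff_val:
  assumes X: "is_sset X" and x: "x \<in> simp X n" and u: "u \<in> std_simplex n"
  shows "real_map X (tildeX X) (tilde_incl X) (rq X (n, x, u)) = rq (tildeX X) (n, tc X n (Inl x), u)"
proof -
  have p: "(n, x, u) \<in> pre_points X" using x u by (simp add: pre_points_def)
  have "Gf X 0 (SOME q. q \<in> rq X (n, x, u)) = Gf X 0 (n, x, u)"
  proof (rule eval_G[OF _ p])
    fix \<tau> m n \<theta> x t assume "dmor m n \<theta>" "x \<in> simp X n" "t \<in> std_simplex m"
    then show "Gf X \<tau> (m, act X m n \<theta> x, t) = Gf X \<tau> (n, x, simplex_push m \<theta> t)" by (rule Gf_resp[OF X])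
  qed simp
  then show ?thesis unfolding ff_eq by (simp add: Gf_def incl_tc)
qed

lemma GH_eval:
  assumes X: "is_sset X" and z: "z \<in> TS X n" and u: "u \<in> std_simplex n" and t: "\<tau> \<in> {0..1}"
  shows "HH X (\<tau>, rq (tildeX X) (n, tc X n z, u)) = Phi X \<tau> n z u"
proof -
  have p: "(n, tc X n z, u) \<in> pre_points (tildeX X)" using tc_in[OF z] u by (simp add: pre_points_def)
  have "GH X \<tau> (SOME q. q \<in> rq (tildeX X) (n, tc X n z, u)) = GH X \<tau> (n, tc X n z, u)"
    by (rule eval_G[OF GH_resp[OF X] p t])
  then show ?thesis unfolding HH_def using GH_tc[OF X z t u] by simp
qed

lemma Gg_eval:
  assumes X: "is_sset X" and z: "z \<in> TS X n" and u: "u \<in> std_simplex n"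
  shows "gg X (rq (tildeX X) (n, tc X n z, u)) = Psi X n z u"
proof -
  have p: "(n, tc X n z, u) \<in> pre_points (tildeX X)" using tc_in[OF z] u by (simp add: pre_points_def)
  have "Gg X 0 (SOME q. q \<in> rq (tildeX X) (n, tc X n z, u)) = Gg X 0 (n, tc X n z, u)"
  proof (rule eval_G[OF _ p])
    fix \<tau> m n \<theta> x t assume "dmor m n \<theta>" "x \<in> simp (tildeX X) n" "t \<in> std_simplex m"
    then show "Gg X \<tau> (m, act (tildeX X) m n \<theta> x, t) = Gg X \<tau> (n, x, simplex_push m \<theta> t)" by (rule Gg_resp[OF X])
  qed simp
  then show ?thesis unfolding gg_def using Gg_tc[OF X z u] by simp
qed

lemma V1:
  assumes X: "is_sset X" and cl: "cl \<in> topspace (realization X)"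
  shows "gg X (real_map X (tildeX X) (tilde_incl X) cl) = cl"
proof -
  obtain n x u where xu: "x \<in> simp X n" "u \<in> std_simplex n" "cl = rq X (n, x, u)" using cl by (rule top_elem)
  show ?thesis unfolding xu(3) ff_val[OF X xu(1,2)] Gg_eval[OF X InlI[OF xu(1)] xu(2)] Psi_Inl ..
qed

lemma V4:
  assumes X: "is_sset X" and cl: "cl \<in> topspace (realization X)" and t: "\<tau> \<in> {0..1}"
  shows "HH X (\<tau>, real_map X (tildeX X) (tilde_incl X) cl) = real_map X (tildeX X) (tilde_incl X) cl"
proof -
  obtain n x u where xu: "x \<in> simp X n" "u \<in> std_simplex n" "cl = rq X (n, x, u)" using cl by (rule top_elem)
  show ?thesis unfolding xu(3) ff_val[OF X xu(1,2)] GH_eval[OF X InlI[OF xu(1)] xu(2) t] Phi_Inl ..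
qed

lemma V2:
  assumes X: "is_sset X" and cl: "cl \<in> topspace (realization (tildeX X))"
  shows "HH X (0, cl) = cl"
proof -
  obtain n c u where cu: "c \<in> simp (tildeX X) n" "u \<in> std_simplex n" "cl = rq (tildeX X) (n, c, u)"
    using cl by (rule top_elem)
  obtain z where z: "z \<in> TS X n" "c = tc X n z" using cu(1) by (rule cls_tc)
  have "HH X (0, cl) = Phi X 0 n z u" unfolding cu(3) z(2) by (rule GH_eval[OF X z(1) cu(2)]) simp
  also have "\<dots> = cl"
  proof (cases z)
    case (Inl x)
    show ?thesis unfolding cu(3) z(2) using Inl by (simp add: Phi_Inl)
  next
    case (Inr p)
    obtain \<sigma> s where p: "p = (\<sigma>, s)" by (cases p)
    then have \<sigma>: "\<sigma> \<in> simp X 1" and s: "s \<in> simp J_sset n" using z Inr by (simp_all add: simp_copr)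
    let ?Y = "tildeX X" and ?C = "tc X (Suc (Suc n)) (Inr (\<sigma>, extd n s))"
    have Cz: "Inr (\<sigma>, extd n s) \<in> TS X (Suc (Suc n))" by (rule inr_TS[OF \<sigma> extd_J[OF s]])
    have a: "act ?Y n (Suc (Suc n)) Suc ?C = tc X n (Inr (\<sigma>, s))"
      unfolding tc_Inr_act[OF X Suc_dmor Cz] Suc_jact[OF s] ..
    have an: "act ?Y n (Suc (Suc n)) Suc ?C \<in> simp ?Y n" unfolding a by (rule tc_in[OF inr_TS[OF \<sigma> s]])
    have "rq ?Y (n, act ?Y n (Suc (Suc n)) Suc ?C, u) = rq ?Y (Suc (Suc n), ?C, simplex_push n Suc u)"
      by (rule rq_gen[OF Suc_dmor tc_in[OF Cz] an cu(2)])
    then show ?thesis unfolding cu(3) z(2) Inr p Phi_Inr a Suc_push[of n u s] by simp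
  qed
  finally show ?thesis .
qed

lemma V3:
  assumes X: "is_sset X" and cl: "cl \<in> topspace (realization (tildeX X))"
  shows "HH X (1, cl) = real_map X (tildeX X) (tilde_incl X) (gg X cl)"
proof -
  obtain n c u where cu: "c \<in> simp (tildeX X) n" "u \<in> std_simplex n" "cl = rq (tildeX X) (n, c, u)"
    using cl by (rule top_elem)
  obtain z where z: "z \<in> TS X n" "c = tc X n z" using cu(1) by (rule cls_tc)
  have h: "HH X (1, cl) = Phi X 1 n z u" unfolding cu(3) z(2) by (rule GH_eval[OF X z(1) cu(2)]) simp
  have g: "gg X cl = Psi X n z u" unfolding cu(3) z(2) by (rule Gg_eval[OF X z(1) cu(2)])
  show ?thesis
  proof (cases z)
    case (Inl x)
    then have x: "x \<in> simp X n" using z by simp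
    show ?thesis unfolding h g Inl Phi_Inl Psi_Inl ff_val[OF X x cu(2)] ..
  next
    case (Inr p)
    obtain \<sigma> s where p: "p = (\<sigma>, s)" by (cases p)
    then have \<sigma>: "\<sigma> \<in> simp X 1" and s: "s \<in> simp J_sset n" using z Inr by (simp_all add: simp_copr)
    let ?Y = "tildeX X" and ?C = "tc X (Suc (Suc n)) (Inr (\<sigma>, extd n s))"
    have Cz: "Inr (\<sigma>, extd n s) \<in> TS X (Suc (Suc n))" by (rule inr_TS[OF \<sigma> extd_J[OF s]])
    have a: "act ?Y 1 (Suc (Suc n)) (endsT n) ?C = tc X 1 (Inl \<sigma>)"
      unfolding tc_Inr_act[OF X endsT_dmor Cz] endsT_jact tc_edge01[OF X \<sigma>] ..
    have an: "act ?Y 1 (Suc (Suc n)) (endsT n) ?C \<in> simp ?Y 1" unfolding a by (rule tc_in[OF InlI[OF \<sigma>]])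
    have a01s: "a01 (wA n s u) \<in> std_simplex 1" using wA_bounds[OF cu(2)] by (intro a01_simplex)
    have "rq ?Y (1, act ?Y 1 (Suc (Suc n)) (endsT n) ?C, a01 (wA n s u)) = rq ?Y (Suc (Suc n), ?C, simplex_push 1 (endsT n) (a01 (wA n s u)))"
      by (rule rq_gen[OF endsT_dmor tc_in[OF Cz] an a01s])
    then have "rq ?Y (1, tc X 1 (Inl \<sigma>), a01 (wA n s u)) = Phi X 1 n z u"
      unfolding a endsT_push Inr p Phi_Inr .
    then show ?thesis unfolding h g Inr p Psi_Inr ff_val[OF X \<sigma> a01s] by simp
  qed
qed


lemma base_in: "sphere_base \<in> topspace (nsphere n)"
proof -
  have "(\<Sum>i\<le>n. (if i = 0 then 1 else 0::real)^2) = (\<Sum>i\<le>n. if i = 0 then 1 else 0)"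
    by (rule sum.cong) auto
  also have "\<dots> = 1" by simp
  finally show ?thesis by (simp add: nsphere sphere_base_def)
qed

lemma HT:
  assumes X: "is_sset X"
  shows "homotopic_with (\<lambda>k. \<forall>y\<in>real_map X (tildeX X) (tilde_incl X) ` topspace (realization X). k y = y)
     (realization (tildeX X)) (realization (tildeX X)) id (real_map X (tildeX X) (tilde_incl X) \<circ> gg X)"
proof -
  let ?f = "real_map X (tildeX X) (tilde_incl X)" and ?S = "realization X" and ?T = "realization (tildeX X)"
  let ?P = "\<lambda>k. \<forall>y\<in>?f ` topspace ?S. k y = y"
  have fS: "?f ` topspace ?S \<subseteq> topspace ?T" using ff_cont[OF X] by (rule continuous_map_image_subset_topspace)
  have "homotopic_with ?P ?T ?T (\<lambda>c. HH X (0, c)) (\<lambda>c. HH X (1, c))"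
    unfolding homotopic_with_def
  proof (rule exI[of _ "HH X"], intro conjI)
    show "continuous_map (prod_topology (top_of_set {0..1}) ?T) ?T (HH X)" by (rule HH_cont[OF X])
    show "\<forall>x. HH X (0, x) = HH X (0, x)" by simp
    show "\<forall>x. HH X (1, x) = HH X (1, x)" by simp
    show "\<forall>t\<in>{0..1}. ?P (\<lambda>x. HH X (t, x))" using V4[OF X] by auto
  qed
  then show ?thesis
  proof (rule homotopic_with_eq)
    fix x assume "x \<in> topspace ?T"
    then show "id x = HH X (0, x)" "(?f \<circ> gg X) x = HH X (1, x)" using V2[OF X] V3[OF X] by auto
  next
    fix h k :: "(nat \<times> ('a + 'a \<times> (nat \<Rightarrow> nat)) set \<times> (nat \<Rightarrow> real)) set \<Rightarrow> (nat \<times> ('a + 'a \<times> (nat \<Rightarrow> nat)) set \<times> (nat \<Rightarrow> real)) set"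
    assume hk: "\<And>x. x \<in> topspace ?T \<Longrightarrow> h x = k x"
    show "(\<forall>y\<in>?f ` topspace ?S. h y = y) \<longleftrightarrow> (\<forall>y\<in>?f ` topspace ?S. k y = y)"
    proof (rule ball_cong[OF refl])
      fix y assume "y \<in> ?f ` topspace ?S"
      then have "h y = k y" using hk fS by blast
      then show "(h y = y) = (k y = y)" by simp
    qed
  qed
qed

lemma whe_pc:
  assumes X: "is_sset X" and y: "y \<in> topspace (realization (tildeX X))"
  shows "\<exists>x\<in>topspace (realization X). path_component_of (realization (tildeX X)) (real_map X (tildeX X) (tilde_incl X) x) y"
proof -
  let ?f = "real_map X (tildeX X) (tilde_incl X)" and ?S = "realization X" and ?T = "realization (tildeX X)"
  let ?g = "gg X"
  have "continuous_map (top_of_set {0..1}) (prod_topology (top_of_set {0..1}) ?T) (\<lambda>t. (t, y))"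
    unfolding continuous_map_pairwise using y by (simp add: o_def)
  then have "continuous_map (top_of_set {0..1}) ?T (HH X \<circ> (\<lambda>t. (t, y)))"
    by (rule continuous_map_compose[OF _ HH_cont[OF X]])
  then have p: "pathin ?T (\<lambda>t. HH X (t, y))" unfolding pathin_def by (simp add: o_def)
  have "path_component_of ?T y (?f (?g y))"
    unfolding path_component_of_def
    by (rule exI[of _ "\<lambda>t. HH X (t, y)"]) (simp add: p V2[OF X y] V3[OF X y])
  then have "path_component_of ?T (?f (?g y)) y" by (rule path_component_of_sym)
  moreover have "?g y \<in> topspace ?S" using continuous_map_image_subset_topspace[OF gg_cont[OF X]] y by blast
  ultimately show ?thesis by blast
qed

lemma whe_inj:
  assumes X: "is_sset X" and x: "x \<in> topspace (realization X)"
    and c1: "continuous_map (nsphere n) (realization X) g1"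
    and c2: "continuous_map (nsphere n) (realization X) g2"
    and hw: "homotopic_with (\<lambda>h. h sphere_base = real_map X (tildeX X) (tilde_incl X) x) (nsphere n) (realization (tildeX X))
         (real_map X (tildeX X) (tilde_incl X) \<circ> g1) (real_map X (tildeX X) (tilde_incl X) \<circ> g2)"
  shows "homotopic_with (\<lambda>h. h sphere_base = x) (nsphere n) (realization X) g1 g2"
proof -
  let ?f = "real_map X (tildeX X) (tilde_incl X)" and ?S = "realization X" and ?T = "realization (tildeX X)"
  let ?g = "gg X"
  have "homotopic_with (\<lambda>h. h sphere_base = x) (nsphere n) ?S (?g \<circ> (?f \<circ> g1)) (?g \<circ> (?f \<circ> g2))"
  proof (rule homotopic_with_compose_continuous_map_left[OF hw gg_cont[OF X]])
    fix j assume "j sphere_base = ?f x"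
    then show "(?g \<circ> j) sphere_base = x" using V1[OF X x] by simp
  qed
  then show ?thesis
  proof (rule homotopic_with_eq)
    fix y assume y: "y \<in> topspace (nsphere n)"
    have "g1 y \<in> topspace ?S" using continuous_map_image_subset_topspace[OF c1] y by blast
    then show "g1 y = (?g \<circ> (?f \<circ> g1)) y" using V1[OF X] by simp
    have "g2 y \<in> topspace ?S" using continuous_map_image_subset_topspace[OF c2] y by blast
    then show "g2 y = (?g \<circ> (?f \<circ> g2)) y" using V1[OF X] by simp
  next
    fix h k :: "(nat \<Rightarrow> real) \<Rightarrow> (nat \<times> 'a \<times> (nat \<Rightarrow> real)) set"
    assume "\<And>y. y \<in> topspace (nsphere n) \<Longrightarrow> h y = k y"
    then have "h sphere_base = k sphere_base" using base_in by blast
    then show "(h sphere_base = x) = (k sphere_base = x)" by simp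
  qed
qed

lemma whe_surj:
  assumes X: "is_sset X" and x: "x \<in> topspace (realization X)"
    and hc: "continuous_map (nsphere n) (realization (tildeX X)) h"
    and hb: "h sphere_base = real_map X (tildeX X) (tilde_incl X) x"
  shows "\<exists>g. continuous_map (nsphere n) (realization X) g \<and> g sphere_base = x \<and>
      homotopic_with (\<lambda>k. k sphere_base = real_map X (tildeX X) (tilde_incl X) x) (nsphere n) (realization (tildeX X))
        (real_map X (tildeX X) (tilde_incl X) \<circ> g) h"
proof (intro exI conjI)
  let ?f = "real_map X (tildeX X) (tilde_incl X)" and ?S = "realization X" and ?T = "realization (tildeX X)"
  let ?g = "gg X"
  show "continuous_map (nsphere n) ?S (?g \<circ> h)" by (rule continuous_map_compose[OF hc gg_cont[OF X]])
  show "(?g \<circ> h) sphere_base = x" using hb V1[OF X x] by simp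
  have fx: "?f x \<in> ?f ` topspace ?S" using x by blast
  have "homotopic_with (\<lambda>k. k sphere_base = ?f x) (nsphere n) ?T (id \<circ> h) ((?f \<circ> ?g) \<circ> h)"
  proof (rule homotopic_with_compose_continuous_map_right[OF HT[OF X] hc])
    fix j assume "\<forall>y\<in>?f ` topspace ?S. j y = y"
    then have "j (?f x) = ?f x" using fx by blast
    then show "(j \<circ> h) sphere_base = ?f x" using hb by simp
  qed
  then have "homotopic_with (\<lambda>k. k sphere_base = ?f x) (nsphere n) ?T ((?f \<circ> ?g) \<circ> h) (id \<circ> h)"
    by (rule homotopic_with_symD)
  moreover have "id \<circ> h = h" by simp
  moreover have "(?f \<circ> ?g) \<circ> h = ?f \<circ> (?g \<circ> h)" by (simp add: o_assoc)
  ultimately show "homotopic_with (\<lambda>k. k sphere_base = ?f x) (nsphere n) ?T (?f \<circ> (?g \<circ> h)) h" by simp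
qed

theorem main_aux:
  fixes X :: "'a sset"
  assumes X: "is_sset X"
  shows "hocat_is_groupoid (tildeX X)
       \<and> acyclic_cofibration X (tildeX X) (tilde_incl X)
       \<and> homotopy_equivalence_map (realization X) (realization (tildeX X))
             (real_map X (tildeX X) (tilde_incl X))"
proof -
  let ?f = "real_map X (tildeX X) (tilde_incl X)" and ?S = "realization X" and ?T = "realization (tildeX X)"
  let ?g = "gg X"
  have fc: "continuous_map ?S ?T ?f" by (rule ff_cont[OF X])
  have gc: "continuous_map ?T ?S ?g" by (rule gg_cont[OF X])
  have ht: "homotopic_with (\<lambda>k. \<forall>y\<in>?f ` topspace ?S. k y = y) ?T ?T id (?f \<circ> ?g)" by (rule HT[OF X])
  have heq: "homotopy_equivalence_map ?S ?T ?f"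
    unfolding homotopy_equivalence_map_def
  proof (intro conjI exI[of _ ?g] fc gc)
    show "homotopic_with (\<lambda>_. True) ?S ?S (?g \<circ> ?f) id"
    proof (rule homotopic_with_equal)
      show "continuous_map ?S ?S (?g \<circ> ?f)" by (rule continuous_map_compose[OF fc gc])
      fix x assume "x \<in> topspace ?S"
      then show "(?g \<circ> ?f) x = id x" using V1[OF X] by simp
    qed simp_all
    have "homotopic_with (\<lambda>_. True) ?T ?T id (?f \<circ> ?g)"
      by (rule homotopic_with_mono[OF ht]) simp
    then show "homotopic_with (\<lambda>_. True) ?T ?T (?f \<circ> ?g) id"
      by (rule homotopic_with_symD)
  qed
  have whe: "weak_homotopy_equivalence ?S ?T ?f"
    unfolding weak_homotopy_equivalence_def
  proof (intro conjI ballI allI impI fc)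
    fix y assume "y \<in> topspace ?T"
    then show "\<exists>x\<in>topspace ?S. path_component_of ?T (?f x) y" by (rule whe_pc[OF X])
  next
    fix n x g1 g2
    assume x: "x \<in> topspace ?S"
      and H: "continuous_map (nsphere n) ?S g1 \<and> g1 sphere_base = x \<and>
           continuous_map (nsphere n) ?S g2 \<and> g2 sphere_base = x \<and>
           homotopic_with (\<lambda>h. h sphere_base = ?f x) (nsphere n) ?T (?f \<circ> g1) (?f \<circ> g2)"
    then show "homotopic_with (\<lambda>h. h sphere_base = x) (nsphere n) ?S g1 g2"
      using whe_inj[OF X x] by blast
  next
    fix n x h
    assume x: "x \<in> topspace ?S" and h: "continuous_map (nsphere n) ?T h \<and> h sphere_base = ?f x"
    then show "\<exists>g. continuous_map (nsphere n) ?S g \<and> g sphere_base = x \<and>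
             homotopic_with (\<lambda>k. k sphere_base = ?f x) (nsphere n) ?T (?f \<circ> g) h"
      using whe_surj[OF X x] by blast
  qed
  show ?thesis
  proof (intro conjI)
    show "hocat_is_groupoid (tildeX X)" by (rule groupoid[OF X])
    show "acyclic_cofibration X (tildeX X) (tilde_incl X)"
      unfolding acyclic_cofibration_def weak_equivalence_def by (intro conjI incl_mono[OF X] incl_map[OF X] whe)
    show "homotopy_equivalence_map ?S ?T ?f" by (rule heq)
  qed
qed


theorem mainTheorem10:
  fixes X :: "'a sset"
  assumes "is_sset X"
  shows "hocat_is_groupoid (tildeX X)
       \<and> acyclic_cofibration X (tildeX X) (tilde_incl X)
       \<and> homotopy_equivalence_map (realization X) (realization (tildeX X))
             (real_map X (tildeX X) (tilde_incl X))"
  by (rule main_aux[OF assms])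

end
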